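(* Under the standing assumptions below, the functional equation $$F(\gamma,x,s)=\sup_{a\in\tilde{\mathcal A}(x,s)}\inf_{\lambda\in\mathbb R^I_+}\Big[r(x,a,s)+\sum_{i=1}^I\big(\gamma^ig^i(x,a,s)+\lambda^i(g^i(x,a,s)-\bar g^i)\big)+\beta\mathbb E_sF(\gamma+\lambda,\zeta(x,a,s),s')\Big]$$ has a solution in $\mathcal N$. Moreover, every solution $F\in\mathcal N$ satisfies $F(\gamma,x,s)\le\tilde D(\gamma,x,s)$ for all $(\gamma,x,s)\in\mathbb R^I_+\times\mathcal X\times\mathcal S$.
   Context: Setup. Let $\mathcal S$ be a finite set and $(s_t)_{t\ge0}$ a Markov chain on $\mathcal S$ with transition probabilities $\pi(s'|s)>0$ for all $s,s'$; for $s^t=(s_0,\dots,s_t)$ write $\pi^t(s^t|s_0)$ for its probability and $\mathbb E_{s_t}$ for expectation over future shocks given $s^t$; $\mathbb E_s$ denotes expectation over $s'\sim\pi(\cdot|s)$. Let $\mathcal A\subset\mathbb R^n$ be finite, $\mathcal X\subseteq\mathbb R^m$ countable, $\zeta:\mathcal X\times\mathcal A\times\mathcal S\to\mathcal X$, $p:\mathcal X\times\mathcal A\times\mathcal S\to\mathbb R$, $r,g^1,\dots,g^I$ bounded real functions on $\mathcal X\times\mathcal A\times\mathcal S$, $\bar g^i\in\mathbb R$, $\beta\in(0,1)$. A plan is $a=(a(s^t))_{t,s^t}$, $a(s^t)\in\mathcal A$, inducing $x(s^0)=x_0$, $x(s^{t+1})=\zeta(x(s^t),a(s^t),s_t)$.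 $\tilde{\mathcal A}(x,s)=\{a:p(x,a,s)\ge0\}$; $\tilde{\mathcal A}^\infty(x_0)$ is the set of plans with $a(s^t)\in\tilde{\mathcal A}(x(s^t),s_t)$ for all $t,s^t$. A plan is feasible for $(x_0,s_0)$ if it lies in $\tilde{\mathcal A}^\infty(x_0)$ and $\mathbb E_{s_t}\sum_{n\ge0}\beta^ng^i(x(s^{t+n}),a(s^{t+n}),s_{t+n})\ge\bar g^i$ for all $t,s^t,i$. Standing assumption: for every $(x_0,s_0)$ a feasible plan exists. $\tilde D$: post-action histories $\tilde h^t=(s_0,a_0,\dots,s_t,a_t)\in\mathcal S^{t+1}\times\mathcal A^{t+1}$; a plan generates $\tilde h^t=(s_0,a(s^0),\dots,s_t,a(s^t))$. $\tilde\Lambda$: families $\lambda^i(\tilde h^t)\ge0$ with $\sum_t\sum_{\tilde h^t}\sum_i\beta^t\lambda^i(\tilde h^t)\pi^t(s^t|s_0)<\infty$. $\tilde L(a,\lambda;\gamma,x_0,s_0)=\mathbb E_{s_0}\sum_t\beta^t\big[r(x(s^t),a(s^t),s_t)+\sum_i\gamma^ig^i(x(s^t),a(s^t),s_t)+\sum_i\lambda^i(\tilde h^t)(\sum_{n\ge0}\beta^ng^i(x(s^{t+n}),a(s^{t+n}),s_{t+n})-\bar g^i)\big]$ and $\tilde D(\gamma,x_0,s_0)=\inf_{\lambda\in\tilde\Lambda}\sup_{a\in\tilde{\mathcal A}^\infty(x_0)}\tilde L$. Function spaces. $L=(\|r\|_\infty+\sum_i\|g^i\|_\infty)/(1-\beta)$,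 $B(k)=\{\gamma\in\mathbb R^I_+:\|\gamma\|_\infty\le k\}$, $\mathcal S=\{s_1,\dots,s_{|\mathcal S|}\}$, $\mathcal X=\{x_1,x_2,\dots\}$. $\mathcal M$: functions $F:\mathbb R^I_+\times\mathcal X\times\mathcal S\to\mathbb R$ with $F(\cdot,x,s)\in L^\infty(B(k))$ for all $k$ and $\|F\|_{\mathcal M}=\sum_i2^{-i}\sum_j2^{-j}\sum_{k\ge1}2^{-k}\|F(\cdot,x_j,s_i)\|_{L^\infty(B(k))}<\infty$. $\mathcal N$: those $F\in\mathcal M$ with, for all $x,s$, (i) $F(\cdot,x,s)$ convex; (ii) $|F(\gamma_1,x,s)-F(\gamma_2,x,s)|\le L\|\gamma_1-\gamma_2\|_1$; (iii) $F(\gamma,x,s)\ge v^0+\sum_i\gamma^iv^i$ for every feasible plan for $(x,s)$, $v^0=\mathbb E_s\sum_t\beta^tr(\cdot)$, $v^i=\mathbb E_s\sum_t\beta^tg^i(\cdot)$; (iv) $F(\gamma,x,s)\le(1+\sum_i\gamma^i)L$. *)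

theory Defs
  imports "HOL-Analysis.Analysis" "HOL-Probability.Essential_Supremum"
begin

text \<open>A history s^t = (s_0,...,s_t) is represented by the list
  [s_t, ..., s_1, s_0] (newest shock first).  Transition probabilities are
  P s s' = pi(s'|s).\<close>

text \<open>Conditional probability of the continuation e (newest first) given the history h.\<close>
fun ext_prob :: "('s \<Rightarrow> 's \<Rightarrow> real) \<Rightarrow> 's list \<Rightarrow> 's list \<Rightarrow> real" where
  "ext_prob P [] h = 1"
| "ext_prob P (s' # e) h = P (hd (e @ h)) s' * ext_prob P e h"

definition path_prob :: "('s \<Rightarrow> 's \<Rightarrow> real) \<Rightarrow> 's list \<Rightarrow> real" where
  "path_prob P h = ext_prob P (butlast h) [last h]"

definition cont_value :: "real \<Rightarrow> ('s::finite \<Rightarrow> 's \<Rightarrow> real) \<Rightarrow> ('s list \<Rightarrow> real) \<Rightarrow> 's list \<Rightarrow> real" where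
  "cont_value \<beta> P f h = (\<Sum>n. \<beta> ^ n * (\<Sum>e\<in>{e::'s list. length e = n}. ext_prob P e h * f (e @ h)))"

fun state_path :: "('x \<Rightarrow> 'a \<Rightarrow> 's \<Rightarrow> 'x) \<Rightarrow> ('s list \<Rightarrow> 'a) \<Rightarrow> 'x \<Rightarrow> 's list \<Rightarrow> 'x" where
  "state_path \<zeta> a x0 [] = x0"
| "state_path \<zeta> a x0 [s] = x0"
| "state_path \<zeta> a x0 (s' # s # h) = \<zeta> (state_path \<zeta> a x0 (s # h)) (a (s # h)) s"

definition path_fun :: "('x \<Rightarrow> 'a \<Rightarrow> 's \<Rightarrow> 'x) \<Rightarrow> ('s list \<Rightarrow> 'a) \<Rightarrow> 'x \<Rightarrow> ('x \<Rightarrow> 'a \<Rightarrow> 's \<Rightarrow> real) \<Rightarrow> 's list \<Rightarrow> real" where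
  "path_fun \<zeta> a x0 f h = f (state_path \<zeta> a x0 h) (a h) (hd h)"

definition hists :: "'s \<Rightarrow> 's list set" where
  "hists s0 = {h. h \<noteq> [] \<and> last h = s0}"

definition A_tilde :: "'a set \<Rightarrow> ('x \<Rightarrow> 'a \<Rightarrow> 's \<Rightarrow> real) \<Rightarrow> 'x \<Rightarrow> 's \<Rightarrow> 'a set" where
  "A_tilde A p x s = {a \<in> A. 0 \<le> p x a s}"

definition adm_plans :: "'a set \<Rightarrow> ('x \<Rightarrow> 'a \<Rightarrow> 's \<Rightarrow> real) \<Rightarrow> ('x \<Rightarrow> 'a \<Rightarrow> 's \<Rightarrow> 'x) \<Rightarrow> 'x \<Rightarrow> 's \<Rightarrow> ('s list \<Rightarrow> 'a) set" where
  "adm_plans A p \<zeta> x0 s0 =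
     {a. \<forall>h\<in>hists s0. a h \<in> A_tilde A p (state_path \<zeta> a x0 h) (hd h)}"

definition feasible ::
  "real \<Rightarrow> ('s::finite \<Rightarrow> 's \<Rightarrow> real) \<Rightarrow> 'a set \<Rightarrow> ('x \<Rightarrow> 'a \<Rightarrow> 's \<Rightarrow> real) \<Rightarrow> ('x \<Rightarrow> 'a \<Rightarrow> 's \<Rightarrow> 'x)
   \<Rightarrow> ('i::finite \<Rightarrow> 'x \<Rightarrow> 'a \<Rightarrow> 's \<Rightarrow> real) \<Rightarrow> ('i \<Rightarrow> real) \<Rightarrow> 'x \<Rightarrow> 's \<Rightarrow> ('s list \<Rightarrow> 'a) \<Rightarrow> bool" where
  "feasible \<beta> P A p \<zeta> g gbar x0 s0 a \<longleftrightarrow>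
     a \<in> adm_plans A p \<zeta> x0 s0 \<and>
     (\<forall>h\<in>hists s0. \<forall>i. cont_value \<beta> P (path_fun \<zeta> a x0 (g i)) h \<ge> gbar i)"

fun post_hist :: "('s list \<Rightarrow> 'a) \<Rightarrow> 's list \<Rightarrow> ('s \<times> 'a) list" where
  "post_hist a [] = []"
| "post_hist a (s # h) = (s, a (s # h)) # post_hist a h"

definition posthists :: "'a set \<Rightarrow> 's \<Rightarrow> nat \<Rightarrow> ('s \<times> 'a) list set" where
  "posthists A s0 t = {ht. length ht = Suc t \<and> last (map fst ht) = s0 \<and> set (map snd ht) \<subseteq> A}"

definition Lambda_set :: "real \<Rightarrow> ('s::finite \<Rightarrow> 's \<Rightarrow> real) \<Rightarrow> 'a set \<Rightarrow> 's
    \<Rightarrow> ('i::finite \<Rightarrow> ('s \<times> 'a) list \<Rightarrow> real) set" where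
  "Lambda_set \<beta> P A s0 =
     {lam. (\<forall>i ht. 0 \<le> lam i ht) \<and>
          summable (\<lambda>t. \<Sum>ht\<in>posthists A s0 t. \<Sum>i\<in>UNIV. \<beta> ^ t * lam i ht * path_prob P (map fst ht))}"

text \<open>The Lagrangian tilde L(a, lambda; gamma, x_0, s_0); the inner future sum is
  taken in conditional expectation given s^t (tower property).\<close>
definition Lagr ::
  "real \<Rightarrow> ('s::finite \<Rightarrow> 's \<Rightarrow> real) \<Rightarrow> ('x \<Rightarrow> 'a \<Rightarrow> 's \<Rightarrow> 'x) \<Rightarrow> ('x \<Rightarrow> 'a \<Rightarrow> 's \<Rightarrow> real)
   \<Rightarrow> ('i::finite \<Rightarrow> 'x \<Rightarrow> 'a \<Rightarrow> 's \<Rightarrow> real) \<Rightarrow> ('i \<Rightarrow> real)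
   \<Rightarrow> ('s list \<Rightarrow> 'a) \<Rightarrow> ('i \<Rightarrow> ('s \<times> 'a) list \<Rightarrow> real) \<Rightarrow> real^'i \<Rightarrow> 'x \<Rightarrow> 's \<Rightarrow> real" where
  "Lagr \<beta> P \<zeta> r g gbar a lam \<gamma> x0 s0 =
     cont_value \<beta> P
       (\<lambda>h. path_fun \<zeta> a x0 r h + (\<Sum>i\<in>UNIV. \<gamma> $ i * path_fun \<zeta> a x0 (g i) h)
            + (\<Sum>i\<in>UNIV. lam i (post_hist a h) * (cont_value \<beta> P (path_fun \<zeta> a x0 (g i)) h - gbar i)))
       [s0]"

definition D_tilde ::
  "real \<Rightarrow> ('s::finite \<Rightarrow> 's \<Rightarrow> real) \<Rightarrow> 'a set \<Rightarrow> ('x \<Rightarrow> 'a \<Rightarrow> 's \<Rightarrow> real) \<Rightarrow> ('x \<Rightarrow> 'a \<Rightarrow> 's \<Rightarrow> 'x)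
   \<Rightarrow> ('x \<Rightarrow> 'a \<Rightarrow> 's \<Rightarrow> real) \<Rightarrow> ('i::finite \<Rightarrow> 'x \<Rightarrow> 'a \<Rightarrow> 's \<Rightarrow> real) \<Rightarrow> ('i \<Rightarrow> real)
   \<Rightarrow> real^'i \<Rightarrow> 'x \<Rightarrow> 's \<Rightarrow> ereal" where
  "D_tilde \<beta> P A p \<zeta> r g gbar \<gamma> x0 s0 =
     (INF lam\<in>Lambda_set \<beta> P A s0. SUP a\<in>adm_plans A p \<zeta> x0 s0.
        ereal (Lagr \<beta> P \<zeta> r g gbar a lam \<gamma> x0 s0))"

definition nonneg_orthant :: "(real^'i::finite) set" where
  "nonneg_orthant = {\<gamma>. \<forall>i. 0 \<le> \<gamma> $ i}"

definition Bk :: "real \<Rightarrow> (real^'i::finite) set" where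
  "Bk k = {\<gamma>. \<forall>i. 0 \<le> \<gamma> $ i \<and> \<gamma> $ i \<le> k}"

definition supnorm :: "'x set \<Rightarrow> 'a set \<Rightarrow> ('x \<Rightarrow> 'a \<Rightarrow> 's \<Rightarrow> real) \<Rightarrow> real" where
  "supnorm X A f = (SUP z\<in>X \<times> A \<times> UNIV. \<bar>f (fst z) (fst (snd z)) (snd (snd z))\<bar>)"

definition Lconst :: "real \<Rightarrow> 'x set \<Rightarrow> 'a set \<Rightarrow> ('x \<Rightarrow> 'a \<Rightarrow> 's \<Rightarrow> real)
   \<Rightarrow> ('i::finite \<Rightarrow> 'x \<Rightarrow> 'a \<Rightarrow> 's \<Rightarrow> real) \<Rightarrow> real" where
  "Lconst \<beta> X A r g = (supnorm X A r + (\<Sum>i\<in>UNIV. supnorm X A (g i))) / (1 - \<beta>)"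

definition Linf_norm :: "real \<Rightarrow> (real^'i::finite \<Rightarrow> real) \<Rightarrow> ereal" where
  "Linf_norm k f = esssup (restrict_space lebesgue (Bk k)) (\<lambda>\<gamma>. ereal \<bar>f \<gamma>\<bar>)"

definition enum_index :: "'x set \<Rightarrow> nat set" where
  "enum_index X = (if finite X then {1..card X} else {1..})"

definition Mnorm :: "'x set \<Rightarrow> (nat \<Rightarrow> 's::finite) \<Rightarrow> (nat \<Rightarrow> 'x)
    \<Rightarrow> (real^'i::finite \<Rightarrow> 'x \<Rightarrow> 's \<Rightarrow> real) \<Rightarrow> ennreal" where
  "Mnorm X senum xenum F =
     (\<Sum>i\<in>{1..CARD('s)}. ennreal ((1/2) ^ i) *
        (\<Sum>j. (if j \<in> enum_index X then ennreal ((1/2) ^ j) else 0) *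
           (\<Sum>k. ennreal ((1/2) ^ Suc k) *
              e2ennreal (Linf_norm (real (Suc k)) (\<lambda>\<gamma>. F \<gamma> (xenum j) (senum i))))))"

definition Mspace :: "'x set \<Rightarrow> (nat \<Rightarrow> 's::finite) \<Rightarrow> (nat \<Rightarrow> 'x)
    \<Rightarrow> (real^'i::finite \<Rightarrow> 'x \<Rightarrow> 's \<Rightarrow> real) set" where
  "Mspace X senum xenum =
     {F. (\<forall>x\<in>X. \<forall>s. \<forall>k::nat. k \<ge> 1 \<longrightarrow> Linf_norm (real k) (\<lambda>\<gamma>. F \<gamma> x s) < \<infinity>)
         \<and> Mnorm X senum xenum F < \<infinity>}"

definition Nspace ::
  "real \<Rightarrow> ('s::finite \<Rightarrow> 's \<Rightarrow> real) \<Rightarrow> 'a set \<Rightarrow> 'x set \<Rightarrow> ('x \<Rightarrow> 'a \<Rightarrow> 's \<Rightarrow> real) \<Rightarrow> ('x \<Rightarrow> 'a \<Rightarrow> 's \<Rightarrow> 'x)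
   \<Rightarrow> ('x \<Rightarrow> 'a \<Rightarrow> 's \<Rightarrow> real) \<Rightarrow> ('i::finite \<Rightarrow> 'x \<Rightarrow> 'a \<Rightarrow> 's \<Rightarrow> real) \<Rightarrow> ('i \<Rightarrow> real)
   \<Rightarrow> (nat \<Rightarrow> 's) \<Rightarrow> (nat \<Rightarrow> 'x) \<Rightarrow> (real^'i \<Rightarrow> 'x \<Rightarrow> 's \<Rightarrow> real) set" where
  "Nspace \<beta> P A X p \<zeta> r g gbar senum xenum =
     {F \<in> Mspace X senum xenum. \<forall>x\<in>X. \<forall>s.
        convex_on nonneg_orthant (\<lambda>\<gamma>. F \<gamma> x s)
      \<and> (\<forall>\<gamma>1\<in>nonneg_orthant. \<forall>\<gamma>2\<in>nonneg_orthant.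
           \<bar>F \<gamma>1 x s - F \<gamma>2 x s\<bar> \<le> Lconst \<beta> X A r g * (\<Sum>i\<in>UNIV. \<bar>\<gamma>1 $ i - \<gamma>2 $ i\<bar>))
      \<and> (\<forall>a. feasible \<beta> P A p \<zeta> g gbar x s a \<longrightarrow> (\<forall>\<gamma>\<in>nonneg_orthant.
           F \<gamma> x s \<ge> cont_value \<beta> P (path_fun \<zeta> a x r) [s]
                      + (\<Sum>i\<in>UNIV. \<gamma> $ i * cont_value \<beta> P (path_fun \<zeta> a x (g i)) [s])))
      \<and> (\<forall>\<gamma>\<in>nonneg_orthant. F \<gamma> x s \<le> (1 + (\<Sum>i\<in>UNIV. \<gamma> $ i)) * Lconst \<beta> X A r g)}"

definition bellman_rhs ::
  "real \<Rightarrow> ('s::finite \<Rightarrow> 's \<Rightarrow> real) \<Rightarrow> 'a set \<Rightarrow> ('x \<Rightarrow> 'a \<Rightarrow> 's \<Rightarrow> real) \<Rightarrow> ('x \<Rightarrow> 'a \<Rightarrow> 's \<Rightarrow> 'x)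
   \<Rightarrow> ('x \<Rightarrow> 'a \<Rightarrow> 's \<Rightarrow> real) \<Rightarrow> ('i::finite \<Rightarrow> 'x \<Rightarrow> 'a \<Rightarrow> 's \<Rightarrow> real) \<Rightarrow> ('i \<Rightarrow> real)
   \<Rightarrow> (real^'i \<Rightarrow> 'x \<Rightarrow> 's \<Rightarrow> real) \<Rightarrow> real^'i \<Rightarrow> 'x \<Rightarrow> 's \<Rightarrow> ereal" where
  "bellman_rhs \<beta> P A p \<zeta> r g gbar F \<gamma> x s =
     (SUP a\<in>A_tilde A p x s. INF lam\<in>nonneg_orthant.
        ereal (r x a s + (\<Sum>i\<in>UNIV. \<gamma> $ i * g i x a s + lam $ i * (g i x a s - gbar i))
               + \<beta> * (\<Sum>s'\<in>UNIV. P s s' * F (\<gamma> + lam) (\<zeta> x a s) s')))"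

end

theory Submission
  imports Defs
begin


definition Ex :: "('s::finite \<Rightarrow> 's \<Rightarrow> real) \<Rightarrow> 's list \<Rightarrow> nat \<Rightarrow> ('s list \<Rightarrow> real) \<Rightarrow> real" where
  "Ex P h n f = (\<Sum>e\<in>{e::'s list. length e = n}. ext_prob P e h * f (e @ h))"

lemma fin_len: "finite {e::'s::finite list. length e = n}"
  using finite_lists_length_eq[of "UNIV::'s set" n] by simp

lemma cont_value_Ex: "cont_value \<beta> P f h = (\<Sum>n. \<beta> ^ n * Ex P h n f)"
  unfolding cont_value_def Ex_def by simp

lemma Ex_0[simp]: "Ex P h 0 f = f h"
  unfolding Ex_def by simp

lemma len_Suc_eq: "{e::'s list. length e = Suc n} = (\<lambda>(s,e). s # e) ` (UNIV \<times> {e. length e = n})"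
  by (auto simp: length_Suc_conv image_iff)

lemma Ex_Suc: "Ex P h (Suc n) f = Ex P h n (\<lambda>k. \<Sum>s'\<in>UNIV. P (hd k) s' * f (s' # k))"
proof -
  have inj: "inj_on (\<lambda>(s,e). s # e) (UNIV \<times> {e::'a list. length e = n})"
    by (auto simp: inj_on_def)
  have "Ex P h (Suc n) f = (\<Sum>z\<in>UNIV \<times> {e::'a list. length e = n}. ext_prob P (fst z # snd z) h * f ((fst z # snd z) @ h))"
    unfolding Ex_def len_Suc_eq by (subst sum.reindex[OF inj]) (simp add: case_prod_beta)
  also have "\<dots> = (\<Sum>s'\<in>UNIV. \<Sum>e\<in>{e::'a list. length e = n}. ext_prob P (s' # e) h * f ((s' # e) @ h))"
    by (subst sum.cartesian_product) (simp add: case_prod_beta)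
  also have "\<dots> = (\<Sum>e\<in>{e::'a list. length e = n}. \<Sum>s'\<in>UNIV. ext_prob P (s' # e) h * f ((s' # e) @ h))"
    by (rule sum.swap)
  also have "\<dots> = Ex P h n (\<lambda>k. \<Sum>s'\<in>UNIV. P (hd k) s' * f (s' # k))"
    unfolding Ex_def by (simp add: sum_distrib_left mult_ac)
  finally show ?thesis .
qed

lemma Ex_add: "Ex P h n (\<lambda>k. f k + g k) = Ex P h n f + Ex P h n g"
  unfolding Ex_def by (simp add: distrib_left sum.distrib)

lemma Ex_diff: "Ex P h n (\<lambda>k. f k - g k) = Ex P h n f - Ex P h n g"
  unfolding Ex_def by (simp add: right_diff_distrib sum_subtractf)

lemma Ex_cmult: "Ex P h n (\<lambda>k. c * f k) = c * Ex P h n f"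
  unfolding Ex_def by (simp add: sum_distrib_left mult_ac)

lemma Ex_sum: "Ex P h n (\<lambda>k. \<Sum>i\<in>I. f i k) = (\<Sum>i\<in>I. Ex P h n (f i))"
  unfolding Ex_def by (simp add: sum_distrib_left sum.swap[of _ I])

lemma Ex_cong: "(\<And>e. length e = n \<Longrightarrow> f (e @ h) = g (e @ h)) \<Longrightarrow> Ex P h n f = Ex P h n g"
  unfolding Ex_def by (rule sum.cong) auto

lemma ext_prob_hd: "hd h = hd h' \<Longrightarrow> ext_prob P e h = ext_prob P e h'"
  by (induction e) (auto simp: hd_append)

lemma Ex_first: "Ex P h (Suc n) f = (\<Sum>s'\<in>UNIV. P (hd h) s' * Ex P (s' # h) n f)"
proof (induction n arbitrary: f)
  case 0
  then show ?case by (simp add: Ex_Suc)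
next
  case (Suc n)
  have "Ex P h (Suc (Suc n)) f = Ex P h (Suc n) (\<lambda>k. \<Sum>s'\<in>UNIV. P (hd k) s' * f (s' # k))"
    by (rule Ex_Suc)
  also have "\<dots> = (\<Sum>s'\<in>UNIV. P (hd h) s' * Ex P (s' # h) n (\<lambda>k. \<Sum>s'\<in>UNIV. P (hd k) s' * f (s' # k)))"
    by (rule Suc)
  also have "\<dots> = (\<Sum>s'\<in>UNIV. P (hd h) s' * Ex P (s' # h) (Suc n) f)"
    by (simp add: Ex_Suc)
  finally show ?case .
qed

lemma Ex_tower: "Ex P h T (\<lambda>k. Ex P k n f) = Ex P h (T + n) f"
proof (induction T arbitrary: h)
  case 0
  then show ?case by simp
next
  case (Suc T)
  show ?case by (simp add: Ex_first Suc)
qed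

locale mc =
  fixes P :: "'s::finite \<Rightarrow> 's \<Rightarrow> real" and \<beta> :: real
  assumes P_pos: "\<And>s s'. P s s' > 0"
    and P_sum: "\<And>s. (\<Sum>s'\<in>UNIV. P s s') = 1"
    and \<beta>0: "0 < \<beta>" and \<beta>1: "\<beta> < 1"
begin

lemma P_nn: "P s s' \<ge> 0" using P_pos[of s s'] by simp

lemma ext_prob_pos: "ext_prob P e h > 0"
  by (induction e) (auto intro!: mult_pos_pos P_pos)

lemma ext_prob_nn: "ext_prob P e h \<ge> 0"
  using ext_prob_pos[of e h] by simp

lemma Ex_const: "Ex P h n (\<lambda>k. c) = c"
proof (induction n arbitrary: c)
  case 0 then show ?case by simp
next
  case (Suc n)
  have "Ex P h (Suc n) (\<lambda>k. c) = Ex P h n (\<lambda>k. \<Sum>s'\<in>UNIV. P (hd k) s' * c)"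
    by (rule Ex_Suc)
  also have "\<dots> = Ex P h n (\<lambda>k. c)"
    by (simp add: sum_distrib_right[symmetric] P_sum)
  finally show ?case using Suc by simp
qed

lemma Ex_mono: "(\<And>e. length e = n \<Longrightarrow> f (e @ h) \<le> g (e @ h)) \<Longrightarrow> Ex P h n f \<le> Ex P h n g"
  unfolding Ex_def by (rule sum_mono) (auto intro!: mult_left_mono ext_prob_nn)

lemma Ex_nn: "(\<And>e. length e = n \<Longrightarrow> 0 \<le> f (e @ h)) \<Longrightarrow> 0 \<le> Ex P h n f"
  using Ex_mono[of n "\<lambda>_. 0" h f] by (simp add: Ex_const)

lemma Ex_abs: "\<bar>Ex P h n f\<bar> \<le> Ex P h n (\<lambda>k. \<bar>f k\<bar>)"
  unfolding Ex_def
  by (rule order_trans[OF sum_abs]) (simp add: abs_mult ext_prob_nn)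

lemma Ex_bdd: "(\<And>e. length e = n \<Longrightarrow> \<bar>f (e @ h)\<bar> \<le> B) \<Longrightarrow> \<bar>Ex P h n f\<bar> \<le> B"
  using Ex_abs[of h n f] Ex_mono[of n "\<lambda>k. \<bar>f k\<bar>" h "\<lambda>_. B"] by (simp add: Ex_const)

lemma Ex_single_le:
  assumes "length e = n" "\<And>e. length e = n \<Longrightarrow> 0 \<le> f (e @ h)"
  shows "ext_prob P e h * f (e @ h) \<le> Ex P h n f"
  unfolding Ex_def
  by (rule member_le_sum[where f="\<lambda>e. ext_prob P e h * f (e @ h)"]) (use assms fin_len in \<open>auto intro!: mult_nonneg_nonneg ext_prob_nn\<close>)

lemma cv_summable_bdd:
  assumes "\<And>e. \<bar>f (e @ h)\<bar> \<le> B"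
  shows "summable (\<lambda>n. \<beta> ^ n * Ex P h n f)"
proof (rule summable_comparison_test[where g="\<lambda>n. B * \<beta> ^ n"])
  show "\<exists>N. \<forall>n\<ge>N. norm (\<beta> ^ n * Ex P h n f) \<le> B * \<beta> ^ n"
    using Ex_bdd[of _ f h B] assms \<beta>0
    by (auto simp: abs_mult intro!: exI[of _ 0] mult_left_mono[where c="\<beta>^n" for n, simplified mult.commute])
  show "summable (\<lambda>n. B * \<beta> ^ n)"
    using \<beta>0 \<beta>1 by (intro summable_mult summable_geometric) simp
qed

lemma cv_bdd:
  assumes "\<And>e. \<bar>f (e @ h)\<bar> \<le> B"
  shows "\<bar>cont_value \<beta> P f h\<bar> \<le> B / (1 - \<beta>)"
proof -
  have s: "summable (\<lambda>n. \<beta> ^ n * Ex P h n f)" using assms by (rule cv_summable_bdd)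
  have g: "(\<lambda>n. B * \<beta> ^ n) sums (B / (1 - \<beta>))"
    using \<beta>0 \<beta>1 sums_mult[OF geometric_sums[of \<beta>], of B] by (simp add: divide_simps)
  have le: "\<And>n. \<bar>\<beta> ^ n * Ex P h n f\<bar> \<le> B * \<beta> ^ n"
    using Ex_bdd[of _ f h B] assms \<beta>0 by (simp add: abs_mult mult.commute mult_left_mono)
  have sB: "summable (\<lambda>n. B * \<beta> ^ n)" using g by (rule sums_summable)
  have sa: "summable (\<lambda>n. \<bar>\<beta> ^ n * Ex P h n f\<bar>)"
    by (rule summable_comparison_test[OF _ sB]) (use le in auto)
  have "\<bar>cont_value \<beta> P f h\<bar> \<le> (\<Sum>n. \<bar>\<beta> ^ n * Ex P h n f\<bar>)"
    unfolding cont_value_Ex using sa by (rule summable_rabs)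
  also have "\<dots> \<le> (\<Sum>n. B * \<beta> ^ n)"
    by (rule suminf_le[OF le sa sB])
  also have "\<dots> = B / (1 - \<beta>)" using g by (simp add: sums_iff)
  finally show ?thesis .
qed


definition sm :: "'s list \<Rightarrow> ('s list \<Rightarrow> real) \<Rightarrow> bool" where
  "sm h f \<longleftrightarrow> summable (\<lambda>n. \<beta> ^ n * Ex P h n f)"

lemma cv_rec:
  assumes "\<And>s'. sm (s' # h) f"
  shows "cont_value \<beta> P f h = f h + \<beta> * (\<Sum>s'\<in>UNIV. P (hd h) s' * cont_value \<beta> P f (s' # h))"
proof -
  define a where "a n = \<beta> ^ n * Ex P h n f" for n
  have aS: "a (Suc n) = \<beta> * (\<Sum>s'\<in>UNIV. P (hd h) s' * (\<beta> ^ n * Ex P (s' # h) n f))" for n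
    unfolding a_def Ex_first by (simp add: sum_distrib_left mult_ac)
  have s1: "summable (\<lambda>n. a (Suc n))"
    unfolding aS using assms unfolding sm_def
    by (intro summable_mult summable_sum) auto
  then have s0: "summable a" by (simp add: summable_Suc_iff)
  have "cont_value \<beta> P f h = suminf a" unfolding cont_value_Ex a_def ..
  also have "\<dots> = a 0 + (\<Sum>n. a (Suc n))" using suminf_split_head[OF s0] by simp
  also have "(\<Sum>n. a (Suc n)) = \<beta> * (\<Sum>s'\<in>UNIV. P (hd h) s' * cont_value \<beta> P f (s' # h))"
  proof -
    have b: "\<And>s'. summable (\<lambda>n. P (hd h) s' * (\<beta> ^ n * Ex P (s' # h) n f))"
      using assms unfolding sm_def by (intro summable_mult) auto
    have "(\<Sum>n. a (Suc n)) = \<beta> * (\<Sum>n. (\<Sum>s'\<in>UNIV. P (hd h) s' * (\<beta> ^ n * Ex P (s' # h) n f)))"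
      unfolding aS by (rule suminf_mult) (intro summable_sum b)
    also have "(\<Sum>n. (\<Sum>s'\<in>UNIV. P (hd h) s' * (\<beta> ^ n * Ex P (s' # h) n f)))
        = (\<Sum>s'\<in>UNIV. (\<Sum>n. P (hd h) s' * (\<beta> ^ n * Ex P (s' # h) n f)))"
      by (rule suminf_sum) (rule b)
    also have "\<dots> = (\<Sum>s'\<in>UNIV. P (hd h) s' * cont_value \<beta> P f (s' # h))"
      unfolding cont_value_Ex using assms unfolding sm_def by (simp add: suminf_mult)
    finally show ?thesis .
  qed
  finally show ?thesis by (simp add: a_def)
qed

lemma sm_rec: "(\<And>s'. sm (s' # h) f) \<Longrightarrow> sm h f"
proof -
  assume assms: "\<And>s'. sm (s' # h) f"
  define a where "a n = \<beta> ^ n * Ex P h n f" for n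
  have aS: "a (Suc n) = \<beta> * (\<Sum>s'\<in>UNIV. P (hd h) s' * (\<beta> ^ n * Ex P (s' # h) n f))" for n
    unfolding a_def Ex_first by (simp add: sum_distrib_left mult_ac)
  have s1: "summable (\<lambda>n. a (Suc n))"
    unfolding aS using assms unfolding sm_def
    by (intro summable_mult summable_sum) auto
  then show ?thesis unfolding sm_def a_def[symmetric] by (simp add: summable_Suc_iff)
qed

lemma sm_bdd: "(\<And>e. \<bar>f (e @ h)\<bar> \<le> B) \<Longrightarrow> sm h f"
  unfolding sm_def by (rule cv_summable_bdd)

lemma cv_add: "sm h f \<Longrightarrow> sm h g \<Longrightarrow> cont_value \<beta> P (\<lambda>k. f k + g k) h = cont_value \<beta> P f h + cont_value \<beta> P g h"
  unfolding sm_def cont_value_Ex Ex_add by (simp add: distrib_left suminf_add)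

lemma sm_add: "sm h f \<Longrightarrow> sm h g \<Longrightarrow> sm h (\<lambda>k. f k + g k)"
  unfolding sm_def Ex_add by (simp add: distrib_left summable_add)

lemma cv_cmult: "sm h f \<Longrightarrow> cont_value \<beta> P (\<lambda>k. c * f k) h = c * cont_value \<beta> P f h"
  unfolding sm_def cont_value_Ex Ex_cmult by (simp add: suminf_mult[symmetric] mult_ac)

lemma sm_cmult: "sm h f \<Longrightarrow> sm h (\<lambda>k. c * f k)"
  unfolding sm_def Ex_cmult using summable_mult[of _ c] by (simp add: mult_ac)

lemma sm_sum: "(\<And>i. i \<in> I \<Longrightarrow> sm h (f i)) \<Longrightarrow> sm h (\<lambda>k. \<Sum>i\<in>I. f i k)"
  unfolding sm_def Ex_sum by (simp add: sum_distrib_left summable_sum)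

lemma cv_sum: "(\<And>i. i \<in> I \<Longrightarrow> sm h (f i)) \<Longrightarrow> cont_value \<beta> P (\<lambda>k. \<Sum>i\<in>I. f i k) h = (\<Sum>i\<in>I. cont_value \<beta> P (f i) h)"
  unfolding sm_def cont_value_Ex Ex_sum by (simp add: sum_distrib_left suminf_sum)

lemma cv_cong: "(\<And>e. f (e @ h) = g (e @ h)) \<Longrightarrow> cont_value \<beta> P f h = cont_value \<beta> P g h"
  unfolding cont_value_Ex by (subst Ex_cong[of _ f h g]) auto

lemma sm_cong: "(\<And>e. f (e @ h) = g (e @ h)) \<Longrightarrow> sm h f = sm h g"
  unfolding sm_def by (subst Ex_cong[of _ f h g]) auto

end


lemma hists_single[simp]: "[s0] \<in> hists s0"
  by (simp add: hists_def)

lemma hists_Cons: "k \<in> hists s0 \<Longrightarrow> s # k \<in> hists s0"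
  by (simp add: hists_def)

lemma hists_app: "k \<in> hists s0 \<Longrightarrow> e @ k \<in> hists s0"
  by (simp add: hists_def)

lemma hists_ne: "k \<in> hists s0 \<Longrightarrow> k \<noteq> []"
  by (simp add: hists_def)

lemma hists_induct[consumes 1, case_names base step]:
  assumes "k \<in> hists s0"
    and "Q [s0]"
    and "\<And>s k. k \<in> hists s0 \<Longrightarrow> Q k \<Longrightarrow> Q (s # k)"
  shows "Q k"
  using assms(1)
proof (induction k)
  case Nil then show ?case by (simp add: hists_def)
next
  case (Cons s k)
  show ?case
  proof (cases "k = []")
    case True
    then show ?thesis using Cons.prems assms(2) by (simp add: hists_def)
  next
    case False
    then have "k \<in> hists s0" using Cons.prems by (simp add: hists_def)
    then show ?thesis using Cons.IH assms(3) by blast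
  qed
qed

lemma state_path_Cons: "k \<noteq> [] \<Longrightarrow> state_path \<zeta> a x0 (s # k) = \<zeta> (state_path \<zeta> a x0 k) (a k) (hd k)"
  by (cases k) auto

lemma adm_in:
  assumes "a \<in> adm_plans A p \<zeta> x0 s0" "x0 \<in> X" "\<And>x b s. x \<in> X \<Longrightarrow> b \<in> A \<Longrightarrow> \<zeta> x b s \<in> X"
    and "k \<in> hists s0"
  shows "state_path \<zeta> a x0 k \<in> X \<and> a k \<in> A"
  using assms(4)
proof (induction rule: hists_induct)
  case base
  then show ?case using assms(1,2) unfolding adm_plans_def A_tilde_def by auto
next
  case (step s k)
  have "state_path \<zeta> a x0 (s # k) \<in> X"
    using step assms(3) hists_ne[OF step(1)] by (simp add: state_path_Cons)
  moreover have "a (s # k) \<in> A"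
    using assms(1) hists_Cons[OF step(1)] unfolding adm_plans_def A_tilde_def by auto
  ultimately show ?case by simp
qed

lemma state_path_shift:
  "k \<noteq> [] \<Longrightarrow> state_path \<zeta> a x (k @ [s]) = state_path \<zeta> (\<lambda>k'. a (k' @ [s])) (\<zeta> x (a [s]) s) k"
proof (induction k)
  case Nil then show ?case by simp
next
  case (Cons s1 k)
  show ?case
  proof (cases k)
    case Nil then show ?thesis by simp
  next
    case (Cons s2 k')
    then show ?thesis using Cons.IH by simp
  qed
qed

lemma path_fun_shift:
  "k \<noteq> [] \<Longrightarrow> path_fun \<zeta> a x f (k @ [s]) = path_fun \<zeta> (\<lambda>k'. a (k' @ [s])) (\<zeta> x (a [s]) s) f k"
  unfolding path_fun_def using state_path_shift[of k \<zeta> a x s] by (simp add: hd_append)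

lemma cv_shift:
  "h \<noteq> [] \<Longrightarrow> cont_value \<beta> P (path_fun \<zeta> a x f) (h @ [s]) = cont_value \<beta> P (path_fun \<zeta> (\<lambda>k'. a (k' @ [s])) (\<zeta> x (a [s]) s) f) h"
  unfolding cont_value_def
  by (intro arg_cong[where f=suminf] ext arg_cong2[where f="(*)"] refl sum.cong)
     (auto simp: path_fun_shift[symmetric] ext_prob_hd[of "h @ [s]" h] hd_append)

lemma post_hist_fst: "map fst (post_hist a h) = h"
  by (induction h) auto

lemma ext_prob_path_prob: "path_prob P (e @ [s0]) = ext_prob P e [s0]"
  unfolding path_prob_def by simp


definition bnd :: "'x set \<Rightarrow> 'a set \<Rightarrow> ('x \<Rightarrow> 'a \<Rightarrow> 's \<Rightarrow> real) \<Rightarrow> bool" where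
  "bnd X A f \<longleftrightarrow> (\<exists>B. \<forall>x\<in>X. \<forall>a\<in>A. \<forall>s. \<bar>f x a s\<bar> \<le> B)"

lemma supnorm_ge:
  assumes "bnd X A f" "x \<in> X" "a \<in> A"
  shows "\<bar>f x a s\<bar> \<le> supnorm X A f"
proof -
  obtain B where B: "\<forall>x\<in>X. \<forall>a\<in>A. \<forall>s. \<bar>f x a s\<bar> \<le> B" using assms(1) by (auto simp: bnd_def)
  show ?thesis unfolding supnorm_def
    by (rule cSUP_upper2[where x="(x,a,s)"]) (use assms B in \<open>auto intro!: bdd_aboveI2[where M=B]\<close>)
qed

lemma supnorm_nn: "bnd X A f \<Longrightarrow> x \<in> X \<Longrightarrow> a \<in> A \<Longrightarrow> 0 \<le> supnorm X A f"
  using supnorm_ge[of X A f x a] by (meson abs_ge_zero order_trans)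

locale model = mc P \<beta> for P :: "'s::finite \<Rightarrow> 's \<Rightarrow> real" and \<beta> :: real +
  fixes A :: "'a set" and X :: "'x set" and \<zeta> :: "'x \<Rightarrow> 'a \<Rightarrow> 's \<Rightarrow> 'x"
    and p r :: "'x \<Rightarrow> 'a \<Rightarrow> 's \<Rightarrow> real" and g :: "'i::finite \<Rightarrow> 'x \<Rightarrow> 'a \<Rightarrow> 's \<Rightarrow> real"
    and gbar :: "'i \<Rightarrow> real"
  assumes A_fin: "finite A" and \<zeta>_X: "\<And>x a s. x \<in> X \<Longrightarrow> a \<in> A \<Longrightarrow> \<zeta> x a s \<in> X"
    and r_bdd: "bnd X A r" and g_bdd: "\<And>i. bnd X A (g i)"
    and standing: "\<And>x s. x \<in> X \<Longrightarrow> \<exists>a. feasible \<beta> P A p \<zeta> g gbar x s a"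
    and X_ne: "X \<noteq> {}"
begin

abbreviation "feas \<equiv> feasible \<beta> P A p \<zeta> g gbar"
abbreviation "SR \<equiv> supnorm X A r"
abbreviation "SG i \<equiv> supnorm X A (g i)"
abbreviation "L \<equiv> Lconst \<beta> X A r g"

lemma feas_adm: "feas x s a \<Longrightarrow> a \<in> adm_plans A p \<zeta> x s"
  by (simp add: feasible_def)

lemma feas_first: "feas x s a \<Longrightarrow> a [s] \<in> A_tilde A p x s"
proof -
  assume "feas x s a"
  then have "\<forall>h\<in>hists s. a h \<in> A_tilde A p (state_path \<zeta> a x h) (hd h)"
    unfolding feasible_def adm_plans_def by simp
  from bspec[OF this hists_single] show ?thesis by simp
qed

lemma A_ne: "A \<noteq> {}"
proof -
  obtain x where "x \<in> X" using X_ne by auto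
  then obtain a where "feas x undefined a" using standing by blast
  then show ?thesis using feas_first[of x undefined a] by (auto simp: A_tilde_def)
qed

lemma SR_nn: "0 \<le> SR"
  using X_ne A_ne supnorm_nn[OF r_bdd] by blast

lemma SG_nn: "0 \<le> SG i"
  using X_ne A_ne supnorm_nn[OF g_bdd] by blast

lemma L_def': "L = (SR + (\<Sum>i\<in>UNIV. SG i)) / (1 - \<beta>)"
  unfolding Lconst_def ..

lemma L_nn: "0 \<le> L"
  unfolding L_def' using SR_nn SG_nn \<beta>1 by (auto intro!: divide_nonneg_pos sum_nonneg add_nonneg_nonneg)

lemma SR_le: "SR \<le> (1 - \<beta>) * L"
  unfolding L_def' using SG_nn \<beta>1 by (simp add: sum_nonneg)

lemma SG_le: "SG i \<le> (1 - \<beta>) * L"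
proof -
  have "SG i \<le> (\<Sum>j\<in>UNIV. SG j)" by (rule member_le_sum) (auto simp: SG_nn)
  then show ?thesis unfolding L_def' using SR_nn \<beta>1 by simp
qed

lemma SR_div: "SR / (1 - \<beta>) \<le> L"
  using SR_le \<beta>1 by (simp add: divide_simps mult.commute)

lemma SG_div: "SG i / (1 - \<beta>) \<le> L"
  using SG_le \<beta>1 by (simp add: divide_simps mult.commute)

lemma pf_bdd:
  assumes "bnd X A f" "a \<in> adm_plans A p \<zeta> x s" "x \<in> X" "k \<in> hists s"
  shows "\<bar>path_fun \<zeta> a x f k\<bar> \<le> supnorm X A f"
  unfolding path_fun_def
  using adm_in[OF assms(2,3) \<zeta>_X assms(4)] supnorm_ge[OF assms(1)] by blast

lemma pf_bdd_app:
  assumes "bnd X A f" "a \<in> adm_plans A p \<zeta> x s" "x \<in> X" "k \<in> hists s"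
  shows "\<bar>path_fun \<zeta> a x f (e @ k)\<bar> \<le> supnorm X A f"
  using pf_bdd[OF assms(1-3) hists_app[OF assms(4)]] .

lemma shift_adm:
  assumes "a \<in> adm_plans A p \<zeta> x s"
  shows "(\<lambda>k. a (k @ [s])) \<in> adm_plans A p \<zeta> (\<zeta> x (a [s]) s) s'"
  unfolding adm_plans_def
proof (intro CollectI ballI)
  fix h assume h: "h \<in> hists s'"
  then have "h @ [s] \<in> hists s" "h \<noteq> []" by (auto simp: hists_def)
  then show "a (h @ [s]) \<in> A_tilde A p (state_path \<zeta> (\<lambda>k. a (k @ [s])) (\<zeta> x (a [s]) s) h) (hd h)"
    using assms state_path_shift[of h \<zeta> a x s] unfolding adm_plans_def by (auto simp: hd_append)
qed

lemma feas_shift: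
  assumes "feas x s a"
  shows "feas (\<zeta> x (a [s]) s) s' (\<lambda>k. a (k @ [s]))"
  unfolding feasible_def
proof (intro conjI ballI allI)
  show "(\<lambda>k. a (k @ [s])) \<in> adm_plans A p \<zeta> (\<zeta> x (a [s]) s) s'"
    using shift_adm feas_adm[OF assms] by blast
  fix h i assume h: "h \<in> hists s'"
  then have "h @ [s] \<in> hists s" "h \<noteq> []" by (auto simp: hists_def)
  moreover have "gbar i \<le> cont_value \<beta> P (path_fun \<zeta> a x (g i)) (h @ [s])"
    using assms \<open>h @ [s] \<in> hists s\<close> unfolding feasible_def by blast
  ultimately show "gbar i \<le> cont_value \<beta> P (path_fun \<zeta> (\<lambda>k. a (k @ [s])) (\<zeta> x (a [s]) s) (g i)) h"
    using cv_shift[of h \<beta> P \<zeta> a x "g i" s] by simp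
qed

definition Vf :: "('x \<Rightarrow> 'a \<Rightarrow> 's \<Rightarrow> real) \<Rightarrow> ('s list \<Rightarrow> 'a) \<Rightarrow> 'x \<Rightarrow> 's \<Rightarrow> real" where
  "Vf f a x s = cont_value \<beta> P (path_fun \<zeta> a x f) [s]"

lemma V_bdd:
  assumes "bnd X A f" "a \<in> adm_plans A p \<zeta> x s" "x \<in> X"
  shows "\<bar>Vf f a x s\<bar> \<le> supnorm X A f / (1 - \<beta>)"
  unfolding Vf_def by (rule cv_bdd) (rule pf_bdd_app[OF assms], simp)

lemma V_rec:
  assumes "bnd X A f" "feas x s a" "x \<in> X"
  shows "Vf f a x s = f x (a [s]) s + \<beta> * (\<Sum>s'\<in>UNIV. P s s' * Vf f (\<lambda>k. a (k @ [s])) (\<zeta> x (a [s]) s) s')"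
proof -
  have "Vf f a x s = path_fun \<zeta> a x f [s] + \<beta> * (\<Sum>s'\<in>UNIV. P (hd [s]) s' * cont_value \<beta> P (path_fun \<zeta> a x f) [s', s])"
    unfolding Vf_def
  proof (rule cv_rec)
    fix s'
    show "sm [s', s] (path_fun \<zeta> a x f)"
      by (rule sm_bdd, rule pf_bdd_app[OF assms(1) feas_adm[OF assms(2)] assms(3)]) (simp add: hists_def)
  qed
  also have "\<dots> = f x (a [s]) s + \<beta> * (\<Sum>s'\<in>UNIV. P s s' * Vf f (\<lambda>k. a (k @ [s])) (\<zeta> x (a [s]) s) s')"
  proof -
    have "\<And>s'. cont_value \<beta> P (path_fun \<zeta> a x f) [s', s] = cont_value \<beta> P (path_fun \<zeta> (\<lambda>k. a (k @ [s])) (\<zeta> x (a [s]) s) f) [s']"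
      subgoal for s' using cv_shift[of "[s']" \<beta> P \<zeta> a x f s] by simp
      done
    then show ?thesis unfolding Vf_def by (simp add: path_fun_def)
  qed
  finally show ?thesis .
qed

lemma V_gbar: "feas x s a \<Longrightarrow> gbar i \<le> Vf (g i) a x s"
  unfolding feasible_def Vf_def by auto

end


context model begin

abbreviation "orth \<equiv> (nonneg_orthant :: (real^'i) set)"

lemma orth_iff: "\<gamma> \<in> orth \<longleftrightarrow> (\<forall>i. 0 \<le> \<gamma> $ i)"
  by (simp add: nonneg_orthant_def)

lemma orth_add: "\<gamma> \<in> orth \<Longrightarrow> mu \<in> orth \<Longrightarrow> \<gamma> + mu \<in> orth"
  by (simp add: orth_iff)

lemma zero_orth: "0 \<in> orth" by (simp add: orth_iff)

definition hF :: "(real^'i \<Rightarrow> 'x \<Rightarrow> 's \<Rightarrow> real) \<Rightarrow> real^'i \<Rightarrow> 'x \<Rightarrow> 's \<Rightarrow> 'a \<Rightarrow> real^'i \<Rightarrow> real" where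
  "hF F \<gamma> x s a lam = r x a s + (\<Sum>i\<in>UNIV. \<gamma> $ i * g i x a s + lam $ i * (g i x a s - gbar i))
               + \<beta> * (\<Sum>s'\<in>UNIV. P s s' * F (\<gamma> + lam) (\<zeta> x a s) s')"

abbreviation "rhs \<equiv> bellman_rhs \<beta> P A p \<zeta> r g gbar"

lemma rhs_eq: "rhs F \<gamma> x s = (SUP a\<in>A_tilde A p x s. INF lam\<in>orth. ereal (hF F \<gamma> x s a lam))"
  unfolding bellman_rhs_def hF_def ..

definition U :: "real^'i \<Rightarrow> 'x \<Rightarrow> 's \<Rightarrow> real" where
  "U \<gamma> x s = (1 + (\<Sum>i\<in>UNIV. \<gamma> $ i)) * L"

definition good :: "(real^'i \<Rightarrow> 'x \<Rightarrow> 's \<Rightarrow> real) \<Rightarrow> bool" where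
  "good F \<longleftrightarrow> (\<forall>x\<in>X. \<forall>s. \<forall>\<gamma>\<in>orth. F \<gamma> x s \<le> U \<gamma> x s \<and>
      (\<forall>a. feas x s a \<longrightarrow> Vf r a x s + (\<Sum>i\<in>UNIV. \<gamma> $ i * Vf (g i) a x s) \<le> F \<gamma> x s))"

lemma A_tilde_sub: "A_tilde A p x s \<subseteq> A" by (auto simp: A_tilde_def)

lemma A_tilde_fin: "finite (A_tilde A p x s)" using A_fin finite_subset[OF A_tilde_sub] by blast

lemma A_tilde_ne: "x \<in> X \<Longrightarrow> A_tilde A p x s \<noteq> {}"
  using standing[of x s] feas_first by blast

lemma hF_lower:
  assumes F: "good F" and x: "x \<in> X" and \<gamma>: "\<gamma> \<in> orth" and lam: "lam \<in> orth" and a: "feas x s a"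
  shows "Vf r a x s + (\<Sum>i\<in>UNIV. \<gamma> $ i * Vf (g i) a x s) \<le> hF F \<gamma> x s (a [s]) lam"
proof -
  define a0 where "a0 = a [s]"
  define a' where "a' = (\<lambda>k. a (k @ [s]))"
  define x' where "x' = \<zeta> x a0 s"
  have a0A: "a0 \<in> A" using feas_first[OF a] A_tilde_sub unfolding a0_def by blast
  have x'X: "x' \<in> X" unfolding x'_def using \<zeta>_X[OF x a0A] .
  have fs: "feas x' s' a'" for s' unfolding x'_def a'_def a0_def by (rule feas_shift[OF a])
  have Fge: "Vf r a' x' s' + (\<Sum>i\<in>UNIV. (\<gamma> + lam) $ i * Vf (g i) a' x' s') \<le> F (\<gamma> + lam) x' s'" for s'
    using F x'X orth_add[OF \<gamma> lam] fs unfolding good_def by blast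
  have Vr: "Vf r a x s = r x a0 s + \<beta> * (\<Sum>s'\<in>UNIV. P s s' * Vf r a' x' s')"
    unfolding a0_def a'_def x'_def by (rule V_rec[OF r_bdd a x])
  have Vg: "Vf (g i) a x s = g i x a0 s + \<beta> * (\<Sum>s'\<in>UNIV. P s s' * Vf (g i) a' x' s')" for i
    unfolding a0_def a'_def x'_def by (rule V_rec[OF g_bdd a x])
  have gb: "gbar i \<le> Vf (g i) a x s" for i by (rule V_gbar[OF a])
  have "Vf r a x s + (\<Sum>i\<in>UNIV. \<gamma> $ i * Vf (g i) a x s)
      \<le> Vf r a x s + (\<Sum>i\<in>UNIV. \<gamma> $ i * Vf (g i) a x s) + (\<Sum>i\<in>UNIV. lam $ i * (Vf (g i) a x s - gbar i))"
    using lam gb by (auto simp: orth_iff intro!: sum_nonneg mult_nonneg_nonneg)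
  also have "\<dots> = r x a0 s + (\<Sum>i\<in>UNIV. \<gamma> $ i * g i x a0 s + lam $ i * (g i x a0 s - gbar i))
       + \<beta> * (\<Sum>s'\<in>UNIV. P s s' * (Vf r a' x' s' + (\<Sum>i\<in>UNIV. (\<gamma> + lam) $ i * Vf (g i) a' x' s')))"
  proof -
    define S where "S i = (\<Sum>s'\<in>UNIV. P s s' * Vf (g i) a' x' s')" for i
    have e1: "(\<Sum>i\<in>UNIV. \<gamma> $ i * Vf (g i) a x s) + (\<Sum>i\<in>UNIV. lam $ i * (Vf (g i) a x s - gbar i))
       = (\<Sum>i\<in>UNIV. \<gamma> $ i * g i x a0 s + lam $ i * (g i x a0 s - gbar i))
         + \<beta> * (\<Sum>i\<in>UNIV. (\<gamma> + lam) $ i * S i)"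
    proof -
      have "(\<Sum>i\<in>UNIV. \<gamma> $ i * Vf (g i) a x s) + (\<Sum>i\<in>UNIV. lam $ i * (Vf (g i) a x s - gbar i))
          = (\<Sum>i\<in>UNIV. \<gamma> $ i * Vf (g i) a x s + lam $ i * (Vf (g i) a x s - gbar i))"
        by (simp add: sum.distrib)
      also have "\<dots> = (\<Sum>i\<in>UNIV. (\<gamma> $ i * g i x a0 s + lam $ i * (g i x a0 s - gbar i)) + \<beta> * ((\<gamma> + lam) $ i * S i))"
        by (rule sum.cong) (simp_all add: Vg S_def algebra_simps)
      also have "\<dots> = (\<Sum>i\<in>UNIV. \<gamma> $ i * g i x a0 s + lam $ i * (g i x a0 s - gbar i))
         + \<beta> * (\<Sum>i\<in>UNIV. (\<gamma> + lam) $ i * S i)"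
        by (simp add: sum.distrib sum_distrib_left)
      finally show ?thesis .
    qed
    have e2: "(\<Sum>i\<in>UNIV. (\<gamma> + lam) $ i * S i)
        = (\<Sum>s'\<in>UNIV. P s s' * (\<Sum>i\<in>UNIV. (\<gamma> + lam) $ i * Vf (g i) a' x' s'))"
      unfolding S_def by (simp add: sum_distrib_left mult.left_commute) (rule sum.swap)
    have e3: "(\<Sum>s'\<in>UNIV. P s s' * (Vf r a' x' s' + (\<Sum>i\<in>UNIV. (\<gamma> + lam) $ i * Vf (g i) a' x' s')))
       = (\<Sum>s'\<in>UNIV. P s s' * Vf r a' x' s') + (\<Sum>s'\<in>UNIV. P s s' * (\<Sum>i\<in>UNIV. (\<gamma> + lam) $ i * Vf (g i) a' x' s'))"
      by (simp add: distrib_left sum.distrib)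
    show ?thesis using Vr e1 e2 e3 by (simp only: distrib_left)
  qed
  also have "\<dots> \<le> hF F \<gamma> x s a0 lam"
    unfolding hF_def using Fge \<beta>0
    by (intro add_left_mono mult_left_mono sum_mono) (auto intro!: mult_left_mono P_nn simp: x'_def)
  finally show ?thesis unfolding a0_def .
qed

lemma rhs_lower:
  assumes F: "good F" and x: "x \<in> X" and \<gamma>: "\<gamma> \<in> orth" and a: "feas x s a"
  shows "ereal (Vf r a x s + (\<Sum>i\<in>UNIV. \<gamma> $ i * Vf (g i) a x s)) \<le> rhs F \<gamma> x s"
  unfolding rhs_eq
  by (rule SUP_upper2[OF feas_first[OF a]], rule INF_greatest) (use hF_lower[OF F x \<gamma> _ a] in simp)

lemma sum_P_le: "(\<And>s'. f s' \<le> c) \<Longrightarrow> (\<Sum>s'\<in>UNIV. P s s' * f s') \<le> c"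
proof -
  assume "\<And>s'. f s' \<le> c"
  then have "(\<Sum>s'\<in>UNIV. P s s' * f s') \<le> (\<Sum>s'\<in>UNIV. P s s' * c)"
    by (intro sum_mono mult_left_mono P_nn) auto
  also have "\<dots> = c" by (simp add: sum_distrib_right[symmetric] P_sum)
  finally show ?thesis .
qed

lemma hF_upper:
  assumes FU: "\<And>s'. F \<gamma> (\<zeta> x a s) s' \<le> U \<gamma> (\<zeta> x a s) s'" and x: "x \<in> X" and \<gamma>: "\<gamma> \<in> orth" and aA: "a \<in> A"
  shows "hF F \<gamma> x s a 0 \<le> U \<gamma> x s"
proof -
  have r1: "r x a s \<le> (1 - \<beta>) * L" using supnorm_ge[OF r_bdd x aA, of s] SR_le by simp
  have g1: "\<gamma> $ i * g i x a s \<le> \<gamma> $ i * ((1 - \<beta>) * L)" for i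
  proof -
    have "g i x a s \<le> (1 - \<beta>) * L" using supnorm_ge[OF g_bdd x aA, of i s] SG_le[of i] by simp
    then show ?thesis using \<gamma> by (auto simp: orth_iff intro: mult_left_mono)
  qed
  have "hF F \<gamma> x s a 0 = r x a s + (\<Sum>i\<in>UNIV. \<gamma> $ i * g i x a s) + \<beta> * (\<Sum>s'\<in>UNIV. P s s' * F \<gamma> (\<zeta> x a s) s')"
    unfolding hF_def by simp
  also have "\<dots> \<le> (1 - \<beta>) * L + (\<Sum>i\<in>UNIV. \<gamma> $ i * ((1 - \<beta>) * L)) + \<beta> * U \<gamma> x s"
  proof -
    have "(\<Sum>i\<in>UNIV. \<gamma> $ i * g i x a s) \<le> (\<Sum>i\<in>UNIV. \<gamma> $ i * ((1 - \<beta>) * L))"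
      by (rule sum_mono) (rule g1)
    moreover have "(\<Sum>s'\<in>UNIV. P s s' * F \<gamma> (\<zeta> x a s) s') \<le> U \<gamma> x s"
      by (rule sum_P_le) (use FU in \<open>simp add: U_def\<close>)
    ultimately show ?thesis using r1 \<beta>0 by (intro add_mono mult_left_mono) auto
  qed
  also have "\<dots> = U \<gamma> x s"
    by (simp add: U_def sum_distrib_right[symmetric]) (simp add: algebra_simps)
  finally show ?thesis .
qed

lemma rhs_upper:
  assumes FU: "\<And>x s. x \<in> X \<Longrightarrow> F \<gamma> x s \<le> U \<gamma> x s" and x: "x \<in> X" and \<gamma>: "\<gamma> \<in> orth"
  shows "rhs F \<gamma> x s \<le> ereal (U \<gamma> x s)"
  unfolding rhs_eq
proof (rule SUP_least)
  fix a assume a: "a \<in> A_tilde A p x s"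
  then have aA: "a \<in> A" using A_tilde_sub by blast
  have "(INF lam\<in>orth. ereal (hF F \<gamma> x s a lam)) \<le> ereal (hF F \<gamma> x s a 0)"
    by (rule INF_lower) (rule zero_orth)
  also have "\<dots> \<le> ereal (U \<gamma> x s)"
  proof -
    have "hF F \<gamma> x s a 0 \<le> U \<gamma> x s" by (rule hF_upper) (use FU \<zeta>_X[OF x aA] x \<gamma> aA in auto)
    then show ?thesis by simp
  qed
  finally show "(INF lam\<in>orth. ereal (hF F \<gamma> x s a lam)) \<le> ereal (U \<gamma> x s)" .
qed

lemma hF_mono:
  assumes "\<And>x s \<gamma>. x \<in> X \<Longrightarrow> \<gamma> \<in> orth \<Longrightarrow> F \<gamma> x s \<le> G \<gamma> x s" "x \<in> X" "\<gamma> \<in> orth" "lam \<in> orth" "a \<in> A"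
  shows "hF F \<gamma> x s a lam \<le> hF G \<gamma> x s a lam"
  unfolding hF_def using assms \<beta>0 \<zeta>_X orth_add
  by (intro add_left_mono mult_left_mono sum_mono) (auto intro!: mult_left_mono P_nn)

lemma rhs_mono:
  assumes "\<And>x s \<gamma>. x \<in> X \<Longrightarrow> \<gamma> \<in> orth \<Longrightarrow> F \<gamma> x s \<le> G \<gamma> x s" "x \<in> X" "\<gamma> \<in> orth"
  shows "rhs F \<gamma> x s \<le> rhs G \<gamma> x s"
  unfolding rhs_eq
  by (intro SUP_subset_mono[OF order_refl] INF_superset_mono[OF order_refl] ereal_less_eq(3)[THEN iffD2] hF_mono) (use assms A_tilde_sub in blast)+

definition T :: "(real^'i \<Rightarrow> 'x \<Rightarrow> 's \<Rightarrow> real) \<Rightarrow> real^'i \<Rightarrow> 'x \<Rightarrow> 's \<Rightarrow> real" where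
  "T F \<gamma> x s = real_of_ereal (rhs F \<gamma> x s)"

lemma rhs_T:
  assumes F: "good F" and x: "x \<in> X" and \<gamma>: "\<gamma> \<in> orth"
  shows "rhs F \<gamma> x s = ereal (T F \<gamma> x s)"
proof -
  obtain a where a: "feas x s a" using standing[OF x] by blast
  have lo: "ereal (Vf r a x s + (\<Sum>i\<in>UNIV. \<gamma> $ i * Vf (g i) a x s)) \<le> rhs F \<gamma> x s"
    by (rule rhs_lower[OF F x \<gamma> a])
  have up: "rhs F \<gamma> x s \<le> ereal (U \<gamma> x s)"
    by (rule rhs_upper) (use F \<gamma> x in \<open>auto simp: good_def\<close>)
  from lo up have "\<bar>rhs F \<gamma> x s\<bar> \<noteq> \<infinity>" by auto
  then show ?thesis unfolding T_def by (simp add: ereal_real')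
qed

lemma T_good:
  assumes F: "good F"
  shows "good (T F)"
  unfolding good_def
proof (intro ballI allI conjI impI)
  fix x s \<gamma> assume x: "x \<in> X" and \<gamma>: "\<gamma> \<in> orth"
  have up: "rhs F \<gamma> x s \<le> ereal (U \<gamma> x s)"
    by (rule rhs_upper) (use F \<gamma> x in \<open>auto simp: good_def\<close>)
  then show "T F \<gamma> x s \<le> U \<gamma> x s" using rhs_T[OF F x \<gamma>] by simp
  fix a assume a: "feas x s a"
  show "Vf r a x s + (\<Sum>i\<in>UNIV. \<gamma> $ i * Vf (g i) a x s) \<le> T F \<gamma> x s"
    using rhs_lower[OF F x \<gamma> a] rhs_T[OF F x \<gamma>] by simp
qed

lemma rhs_attained:
  assumes x: "x \<in> X"
  shows "\<exists>a\<in>A_tilde A p x s. rhs F \<gamma> x s = (INF lam\<in>orth. ereal (hF F \<gamma> x s a lam))"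
proof -
  let ?f = "\<lambda>a. INF lam\<in>orth. ereal (hF F \<gamma> x s a lam)"
  have fin: "finite (?f ` A_tilde A p x s)" using A_tilde_fin by simp
  have ne: "?f ` A_tilde A p x s \<noteq> {}" using A_tilde_ne[OF x] by simp
  have "rhs F \<gamma> x s = Max (?f ` A_tilde A p x s)"
    unfolding rhs_eq using cSup_eq_Max[OF fin ne] by simp
  moreover have "Max (?f ` A_tilde A p x s) \<in> ?f ` A_tilde A p x s" by (rule Max_in[OF fin ne])
  ultimately show ?thesis by auto
qed

lemma U_good: "good U"
  unfolding good_def
proof (intro ballI allI conjI impI)
  fix x s \<gamma> assume x: "x \<in> X" and \<gamma>: "\<gamma> \<in> orth"
  show "U \<gamma> x s \<le> U \<gamma> x s" by simp
  fix a assume a: "feas x s a"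
  have ad: "a \<in> adm_plans A p \<zeta> x s" by (rule feas_adm[OF a])
  have v0: "Vf r a x s \<le> L" using V_bdd[OF r_bdd ad x] SR_div by simp
  have vi: "\<gamma> $ i * Vf (g i) a x s \<le> \<gamma> $ i * L" for i
    using V_bdd[OF g_bdd ad x, of i] SG_div[of i] \<gamma> by (auto simp: orth_iff intro!: mult_left_mono)
  have "Vf r a x s + (\<Sum>i\<in>UNIV. \<gamma> $ i * Vf (g i) a x s) \<le> L + (\<Sum>i\<in>UNIV. \<gamma> $ i * L)"
    using v0 vi by (intro add_mono sum_mono) auto
  also have "\<dots> = U \<gamma> x s" by (simp add: U_def sum_distrib_right[symmetric] algebra_simps)
  finally show "Vf r a x s + (\<Sum>i\<in>UNIV. \<gamma> $ i * Vf (g i) a x s) \<le> U \<gamma> x s" .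
qed

end


lemma abs1: "(\<beta>::real) \<ge> 0 \<Longrightarrow> S \<le> u * A + v * B \<Longrightarrow> \<beta> * S \<le> u * (\<beta> * A) + v * (\<beta> * B)"
proof -
  assume "\<beta> \<ge> 0" "S \<le> u * A + v * B"
  then have "\<beta> * S \<le> \<beta> * (u * A + v * B)" by (rule mult_left_mono[rotated])
  then show ?thesis by (simp add: algebra_simps)
qed

lemma abs2: "(X1::real) = u * a1 + v * a2 \<Longrightarrow> Y \<le> u * b1 + v * b2 \<Longrightarrow> X1 + Y \<le> u * (a1 + b1) + v * (a2 + b2)"
  by (simp add: algebra_simps)

lemma abs3: "(u::real) + v = 1 \<Longrightarrow> u * (a + e) + v * (b + e) = u * a + v * b + e"
proof -
  assume "u + v = 1"
  then have "u * e + v * e = e" by (metis distrib_right mult_1)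
  then show ?thesis by (simp add: algebra_simps)
qed

context model begin

lemma convex_orth: "convex orth"
  unfolding convex_def by (auto simp: orth_iff intro!: add_nonneg_nonneg mult_nonneg_nonneg)

definition cvx :: "(real^'i \<Rightarrow> 'x \<Rightarrow> 's \<Rightarrow> real) \<Rightarrow> bool" where
  "cvx F \<longleftrightarrow> (\<forall>x\<in>X. \<forall>s. convex_on orth (\<lambda>\<gamma>. F \<gamma> x s))"

definition lip :: "(real^'i \<Rightarrow> 'x \<Rightarrow> 's \<Rightarrow> real) \<Rightarrow> bool" where
  "lip F \<longleftrightarrow> (\<forall>x\<in>X. \<forall>s. \<forall>\<gamma>1\<in>orth. \<forall>\<gamma>2\<in>orth.
      \<bar>F \<gamma>1 x s - F \<gamma>2 x s\<bar> \<le> L * (\<Sum>i\<in>UNIV. \<bar>\<gamma>1 $ i - \<gamma>2 $ i\<bar>))"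

lemma real_le_eps: "(\<And>e. e > 0 \<Longrightarrow> (a::real) \<le> b + e) \<Longrightarrow> a \<le> b"
  by (metis field_le_epsilon)

lemma exists_near:
  assumes F: "good F" and x: "x \<in> X" and \<gamma>: "\<gamma> \<in> orth" and a: "a \<in> A_tilde A p x s" and e: "e > 0"
  shows "\<exists>lam\<in>orth. hF F \<gamma> x s a lam < T F \<gamma> x s + e"
proof -
  have "(INF lam\<in>orth. ereal (hF F \<gamma> x s a lam)) \<le> rhs F \<gamma> x s"
    unfolding rhs_eq by (rule SUP_upper[OF a])
  also have "\<dots> = ereal (T F \<gamma> x s)" by (rule rhs_T[OF F x \<gamma>])
  also have "\<dots> < ereal (T F \<gamma> x s + e)" using e by simp
  finally show ?thesis unfolding INF_less_iff by auto
qed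

lemma T_le_hF:
  assumes F: "good F" and x: "x \<in> X" and \<gamma>: "\<gamma> \<in> orth"
  obtains a where "a \<in> A_tilde A p x s" "\<And>lam. lam \<in> orth \<Longrightarrow> T F \<gamma> x s \<le> hF F \<gamma> x s a lam"
proof -
  obtain a where a: "a \<in> A_tilde A p x s" and eq: "rhs F \<gamma> x s = (INF lam\<in>orth. ereal (hF F \<gamma> x s a lam))"
    using rhs_attained[OF x] by blast
  have "T F \<gamma> x s \<le> hF F \<gamma> x s a lam" if "lam \<in> orth" for lam
  proof -
    have "ereal (T F \<gamma> x s) = (INF lam\<in>orth. ereal (hF F \<gamma> x s a lam))" using eq rhs_T[OF F x \<gamma>] by simp
    also have "\<dots> \<le> ereal (hF F \<gamma> x s a lam)" by (rule INF_lower[OF that])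
    finally show ?thesis by simp
  qed
  then show ?thesis using that a by blast
qed

lemma hF_convex:
  assumes C: "cvx F" and x: "x \<in> X" and aA: "a \<in> A"
    and g1: "\<gamma>1 \<in> orth" and g2: "\<gamma>2 \<in> orth" and l1: "l1 \<in> orth" and l2: "l2 \<in> orth"
    and u: "u \<ge> 0" "v \<ge> 0" "u + v = 1"
  shows "hF F (u *\<^sub>R \<gamma>1 + v *\<^sub>R \<gamma>2) x s a (u *\<^sub>R l1 + v *\<^sub>R l2) \<le> u * hF F \<gamma>1 x s a l1 + v * hF F \<gamma>2 x s a l2"
proof -
  have Fc: "F (u *\<^sub>R (\<gamma>1 + l1) + v *\<^sub>R (\<gamma>2 + l2)) (\<zeta> x a s) s' \<le> u * F (\<gamma>1 + l1) (\<zeta> x a s) s' + v * F (\<gamma>2 + l2) (\<zeta> x a s) s'" for s'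
    using C \<zeta>_X[OF x aA] orth_add[OF g1 l1] orth_add[OF g2 l2] u unfolding cvx_def convex_on_def by blast
  have eqv: "u *\<^sub>R \<gamma>1 + v *\<^sub>R \<gamma>2 + (u *\<^sub>R l1 + v *\<^sub>R l2) = u *\<^sub>R (\<gamma>1 + l1) + v *\<^sub>R (\<gamma>2 + l2)"
    by (simp add: algebra_simps)
  have "(\<Sum>s'\<in>UNIV. P s s' * F (u *\<^sub>R (\<gamma>1 + l1) + v *\<^sub>R (\<gamma>2 + l2)) (\<zeta> x a s) s')
      \<le> (\<Sum>s'\<in>UNIV. P s s' * (u * F (\<gamma>1 + l1) (\<zeta> x a s) s' + v * F (\<gamma>2 + l2) (\<zeta> x a s) s'))"
    by (intro sum_mono mult_left_mono Fc P_nn)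
  also have "\<dots> = u * (\<Sum>s'\<in>UNIV. P s s' * F (\<gamma>1 + l1) (\<zeta> x a s) s') + v * (\<Sum>s'\<in>UNIV. P s s' * F (\<gamma>2 + l2) (\<zeta> x a s) s')"
    by (simp add: sum_distrib_left sum.distrib algebra_simps)
  finally have Fs: "\<beta> * (\<Sum>s'\<in>UNIV. P s s' * F (u *\<^sub>R (\<gamma>1 + l1) + v *\<^sub>R (\<gamma>2 + l2)) (\<zeta> x a s) s')
      \<le> u * (\<beta> * (\<Sum>s'\<in>UNIV. P s s' * F (\<gamma>1 + l1) (\<zeta> x a s) s')) + v * (\<beta> * (\<Sum>s'\<in>UNIV. P s s' * F (\<gamma>2 + l2) (\<zeta> x a s) s'))"
    using \<beta>0 by (intro abs1) simp_all
  have lin: "r x a s + (\<Sum>i\<in>UNIV. (u *\<^sub>R \<gamma>1 + v *\<^sub>R \<gamma>2) $ i * g i x a s + (u *\<^sub>R l1 + v *\<^sub>R l2) $ i * (g i x a s - gbar i))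
     = u * (r x a s + (\<Sum>i\<in>UNIV. \<gamma>1 $ i * g i x a s + l1 $ i * (g i x a s - gbar i)))
       + v * (r x a s + (\<Sum>i\<in>UNIV. \<gamma>2 $ i * g i x a s + l2 $ i * (g i x a s - gbar i)))"
  proof -
    have "r x a s = u * r x a s + v * r x a s" using u by (metis distrib_right mult_1)
    moreover have "(\<Sum>i\<in>UNIV. (u *\<^sub>R \<gamma>1 + v *\<^sub>R \<gamma>2) $ i * g i x a s + (u *\<^sub>R l1 + v *\<^sub>R l2) $ i * (g i x a s - gbar i))
       = u * (\<Sum>i\<in>UNIV. \<gamma>1 $ i * g i x a s + l1 $ i * (g i x a s - gbar i)) + v * (\<Sum>i\<in>UNIV. \<gamma>2 $ i * g i x a s + l2 $ i * (g i x a s - gbar i))"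
    proof -
      have "(\<Sum>i\<in>UNIV. (u *\<^sub>R \<gamma>1 + v *\<^sub>R \<gamma>2) $ i * g i x a s + (u *\<^sub>R l1 + v *\<^sub>R l2) $ i * (g i x a s - gbar i))
        = (\<Sum>i\<in>UNIV. u * (\<gamma>1 $ i * g i x a s + l1 $ i * (g i x a s - gbar i)) + v * (\<gamma>2 $ i * g i x a s + l2 $ i * (g i x a s - gbar i)))"
        by (rule sum.cong) (simp_all add: algebra_simps)
      then show ?thesis by (simp only: sum.distrib sum_distrib_left[symmetric])
    qed
    ultimately show ?thesis by (simp add: algebra_simps)
  qed
  show ?thesis unfolding hF_def eqv by (rule abs2[OF lin Fs])
qed

lemma T_convex:
  assumes F: "good F" and C: "cvx F"
  shows "cvx (T F)"
  unfolding cvx_def convex_on_def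
proof (intro ballI allI conjI impI convex_orth)
  fix x s \<gamma>1 \<gamma>2 and u v :: real
  assume x: "x \<in> X" and g1: "\<gamma>1 \<in> orth" and g2: "\<gamma>2 \<in> orth" and u: "0 \<le> u" "0 \<le> v" "u + v = 1"
  have gu: "u *\<^sub>R \<gamma>1 + v *\<^sub>R \<gamma>2 \<in> orth"
    using convex_orth g1 g2 u unfolding convex_def by blast
  obtain a where a: "a \<in> A_tilde A p x s" and Tle: "\<And>lam. lam \<in> orth \<Longrightarrow> T F (u *\<^sub>R \<gamma>1 + v *\<^sub>R \<gamma>2) x s \<le> hF F (u *\<^sub>R \<gamma>1 + v *\<^sub>R \<gamma>2) x s a lam"
    using T_le_hF[OF F x gu] by blast
  have aA: "a \<in> A" using a A_tilde_sub by blast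
  show "T F (u *\<^sub>R \<gamma>1 + v *\<^sub>R \<gamma>2) x s \<le> u * T F \<gamma>1 x s + v * T F \<gamma>2 x s"
  proof (rule real_le_eps)
    fix e :: real assume e: "e > 0"
    obtain l1 where l1: "l1 \<in> orth" "hF F \<gamma>1 x s a l1 < T F \<gamma>1 x s + e" using exists_near[OF F x g1 a e] by blast
    obtain l2 where l2: "l2 \<in> orth" "hF F \<gamma>2 x s a l2 < T F \<gamma>2 x s + e" using exists_near[OF F x g2 a e] by blast
    have lu: "u *\<^sub>R l1 + v *\<^sub>R l2 \<in> orth" using convex_orth l1 l2 u unfolding convex_def by blast
    have "T F (u *\<^sub>R \<gamma>1 + v *\<^sub>R \<gamma>2) x s \<le> hF F (u *\<^sub>R \<gamma>1 + v *\<^sub>R \<gamma>2) x s a (u *\<^sub>R l1 + v *\<^sub>R l2)"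
      by (rule Tle[OF lu])
    also have "\<dots> \<le> u * hF F \<gamma>1 x s a l1 + v * hF F \<gamma>2 x s a l2"
      by (rule hF_convex[OF C x aA g1 g2 l1(1) l2(1) u])
    also have "\<dots> \<le> u * (T F \<gamma>1 x s + e) + v * (T F \<gamma>2 x s + e)"
      using l1 l2 u by (intro add_mono mult_left_mono) auto
    also have "\<dots> = u * T F \<gamma>1 x s + v * T F \<gamma>2 x s + e"
      using u by (intro abs3) simp
    finally show "T F (u *\<^sub>R \<gamma>1 + v *\<^sub>R \<gamma>2) x s \<le> u * T F \<gamma>1 x s + v * T F \<gamma>2 x s + e" .
  qed
qed


lemma hF_lip:
  assumes Lp: "lip F" and x: "x \<in> X" and aA: "a \<in> A" and g1: "\<gamma>1 \<in> orth" and g2: "\<gamma>2 \<in> orth" and l: "lam \<in> orth"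
  shows "hF F \<gamma>1 x s a lam \<le> hF F \<gamma>2 x s a lam + L * (\<Sum>i\<in>UNIV. \<bar>\<gamma>1 $ i - \<gamma>2 $ i\<bar>)"
proof -
  define d where "d = (\<Sum>i\<in>UNIV. \<bar>\<gamma>1 $ i - \<gamma>2 $ i\<bar>)"
  have A1: "(\<Sum>i\<in>UNIV. \<gamma>1 $ i * g i x a s + lam $ i * (g i x a s - gbar i))
      = (\<Sum>i\<in>UNIV. \<gamma>2 $ i * g i x a s + lam $ i * (g i x a s - gbar i)) + (\<Sum>i\<in>UNIV. (\<gamma>1 $ i - \<gamma>2 $ i) * g i x a s)"
    by (simp add: sum.distrib[symmetric] algebra_simps)
  have A2: "(\<Sum>i\<in>UNIV. (\<gamma>1 $ i - \<gamma>2 $ i) * g i x a s) \<le> (1 - \<beta>) * L * d"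
  proof -
    have "(\<Sum>i\<in>UNIV. (\<gamma>1 $ i - \<gamma>2 $ i) * g i x a s) \<le> (\<Sum>i\<in>UNIV. \<bar>\<gamma>1 $ i - \<gamma>2 $ i\<bar> * ((1 - \<beta>) * L))"
    proof (rule sum_mono)
      fix i
      have "\<bar>g i x a s\<bar> \<le> (1 - \<beta>) * L" using supnorm_ge[OF g_bdd x aA, of i s] SG_le[of i] by simp
      then have "\<bar>(\<gamma>1 $ i - \<gamma>2 $ i) * g i x a s\<bar> \<le> \<bar>\<gamma>1 $ i - \<gamma>2 $ i\<bar> * ((1 - \<beta>) * L)"
        unfolding abs_mult by (rule mult_left_mono) simp
      then show "(\<gamma>1 $ i - \<gamma>2 $ i) * g i x a s \<le> \<bar>\<gamma>1 $ i - \<gamma>2 $ i\<bar> * ((1 - \<beta>) * L)" by simp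
    qed
    also have "\<dots> = (1 - \<beta>) * L * d" unfolding d_def by (simp add: sum_distrib_right[symmetric])
    finally show ?thesis .
  qed
  have x': "\<zeta> x a s \<in> X" by (rule \<zeta>_X[OF x aA])
  have Fd: "F (\<gamma>1 + lam) (\<zeta> x a s) s' \<le> F (\<gamma>2 + lam) (\<zeta> x a s) s' + L * d" for s'
  proof -
    have "\<bar>F (\<gamma>1 + lam) (\<zeta> x a s) s' - F (\<gamma>2 + lam) (\<zeta> x a s) s'\<bar> \<le> L * (\<Sum>i\<in>UNIV. \<bar>(\<gamma>1 + lam) $ i - (\<gamma>2 + lam) $ i\<bar>)"
      using Lp x' orth_add[OF g1 l] orth_add[OF g2 l] unfolding lip_def by blast
    then show ?thesis unfolding d_def by simp
  qed
  have B: "(\<Sum>s'\<in>UNIV. P s s' * F (\<gamma>1 + lam) (\<zeta> x a s) s') \<le> (\<Sum>s'\<in>UNIV. P s s' * F (\<gamma>2 + lam) (\<zeta> x a s) s') + L * d"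
  proof -
    have "(\<Sum>s'\<in>UNIV. P s s' * F (\<gamma>1 + lam) (\<zeta> x a s) s') \<le> (\<Sum>s'\<in>UNIV. P s s' * (F (\<gamma>2 + lam) (\<zeta> x a s) s' + L * d))"
      by (intro sum_mono mult_left_mono Fd P_nn)
    also have "\<dots> = (\<Sum>s'\<in>UNIV. P s s' * F (\<gamma>2 + lam) (\<zeta> x a s) s') + L * d"
      by (simp add: distrib_left sum.distrib sum_distrib_right[symmetric] P_sum)
    finally show ?thesis .
  qed
  have "\<beta> * (\<Sum>s'\<in>UNIV. P s s' * F (\<gamma>1 + lam) (\<zeta> x a s) s') \<le> \<beta> * ((\<Sum>s'\<in>UNIV. P s s' * F (\<gamma>2 + lam) (\<zeta> x a s) s') + L * d)"
    using B \<beta>0 by simp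
  then show ?thesis unfolding hF_def A1 d_def[symmetric] using A2
    by (simp add: algebra_simps)
qed

lemma T_lip1:
  assumes F: "good F" and Lp: "lip F" and x: "x \<in> X" and g1: "\<gamma>1 \<in> orth" and g2: "\<gamma>2 \<in> orth"
  shows "T F \<gamma>1 x s \<le> T F \<gamma>2 x s + L * (\<Sum>i\<in>UNIV. \<bar>\<gamma>1 $ i - \<gamma>2 $ i\<bar>)"
proof -
  obtain a where a: "a \<in> A_tilde A p x s" and Tle: "\<And>lam. lam \<in> orth \<Longrightarrow> T F \<gamma>1 x s \<le> hF F \<gamma>1 x s a lam"
    using T_le_hF[OF F x g1] by blast
  have aA: "a \<in> A" using a A_tilde_sub by blast
  show ?thesis
  proof (rule real_le_eps)
    fix e :: real assume e: "e > 0"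
    obtain l where l: "l \<in> orth" "hF F \<gamma>2 x s a l < T F \<gamma>2 x s + e" using exists_near[OF F x g2 a e] by blast
    have "T F \<gamma>1 x s \<le> hF F \<gamma>1 x s a l" by (rule Tle[OF l(1)])
    also have "\<dots> \<le> hF F \<gamma>2 x s a l + L * (\<Sum>i\<in>UNIV. \<bar>\<gamma>1 $ i - \<gamma>2 $ i\<bar>)" by (rule hF_lip[OF Lp x aA g1 g2 l(1)])
    finally show "T F \<gamma>1 x s \<le> T F \<gamma>2 x s + L * (\<Sum>i\<in>UNIV. \<bar>\<gamma>1 $ i - \<gamma>2 $ i\<bar>) + e" using l(2) by simp
  qed
qed

lemma T_lip:
  assumes F: "good F" and Lp: "lip F"
  shows "lip (T F)"
  unfolding lip_def
proof (intro ballI allI)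
  fix x s \<gamma>1 \<gamma>2 assume x: "x \<in> X" and g1: "\<gamma>1 \<in> orth" and g2: "\<gamma>2 \<in> orth"
  have "(\<Sum>i\<in>UNIV. \<bar>\<gamma>2 $ i - \<gamma>1 $ i\<bar>) = (\<Sum>i\<in>UNIV. \<bar>\<gamma>1 $ i - \<gamma>2 $ i\<bar>)" by (simp add: abs_minus_commute)
  then show "\<bar>T F \<gamma>1 x s - T F \<gamma>2 x s\<bar> \<le> L * (\<Sum>i\<in>UNIV. \<bar>\<gamma>1 $ i - \<gamma>2 $ i\<bar>)"
    using T_lip1[OF F Lp x g1 g2, of s] T_lip1[OF F Lp x g2 g1, of s] by (simp add: abs_le_iff)
qed

lemma U_cvx: "cvx U"
  unfolding cvx_def convex_on_def
proof (intro ballI allI conjI impI convex_orth)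
  fix x s \<gamma>1 \<gamma>2 and u v :: real
  assume u: "0 \<le> u" "0 \<le> v" "u + v = 1"
  have "U (u *\<^sub>R \<gamma>1 + v *\<^sub>R \<gamma>2) x s = (1 + u * (\<Sum>i\<in>UNIV. \<gamma>1 $ i) + v * (\<Sum>i\<in>UNIV. \<gamma>2 $ i)) * L"
    by (simp add: U_def sum.distrib sum_distrib_left)
  also have "\<dots> = u * U \<gamma>1 x s + v * U \<gamma>2 x s"
  proof -
    have "L = u * L + v * L" using u by (metis distrib_right mult_1)
    then show ?thesis unfolding U_def by (simp add: algebra_simps)
  qed
  finally show "U (u *\<^sub>R \<gamma>1 + v *\<^sub>R \<gamma>2) x s \<le> u * U \<gamma>1 x s + v * U \<gamma>2 x s" by simp
qed

lemma U_lip: "lip U"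
  unfolding lip_def
proof (intro ballI allI)
  fix x s \<gamma>1 \<gamma>2
  have "\<bar>U \<gamma>1 x s - U \<gamma>2 x s\<bar> = L * \<bar>(\<Sum>i\<in>UNIV. \<gamma>1 $ i - \<gamma>2 $ i)\<bar>"
    unfolding U_def using L_nn by (simp add: sum_subtractf left_diff_distrib[symmetric] abs_mult)
  also have "\<dots> \<le> L * (\<Sum>i\<in>UNIV. \<bar>\<gamma>1 $ i - \<gamma>2 $ i\<bar>)"
    using L_nn by (intro mult_left_mono sum_abs) auto
  finally show "\<bar>U \<gamma>1 x s - U \<gamma>2 x s\<bar> \<le> L * (\<Sum>i\<in>UNIV. \<bar>\<gamma>1 $ i - \<gamma>2 $ i\<bar>)" .
qed

end


context model begin

definition Fn :: "nat \<Rightarrow> real^'i \<Rightarrow> 'x \<Rightarrow> 's \<Rightarrow> real" where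
  "Fn n = (T ^^ n) U"

lemma Fn_0: "Fn 0 = U" by (simp add: Fn_def)
lemma Fn_Suc: "Fn (Suc n) = T (Fn n)" by (simp add: Fn_def)

lemma Fn_props: "good (Fn n) \<and> cvx (Fn n) \<and> lip (Fn n)"
proof (induction n)
  case 0 then show ?case using U_good U_cvx U_lip by (simp add: Fn_0)
next
  case (Suc n) then show ?case using T_good T_convex T_lip by (simp add: Fn_Suc)
qed

lemma Fn_good: "good (Fn n)" using Fn_props by blast
lemma Fn_cvx: "cvx (Fn n)" using Fn_props by blast
lemma Fn_lip: "lip (Fn n)" using Fn_props by blast

lemma Fn_dec: "x \<in> X \<Longrightarrow> \<gamma> \<in> orth \<Longrightarrow> Fn (Suc n) \<gamma> x s \<le> Fn n \<gamma> x s"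
proof (induction n arbitrary: x \<gamma> s)
  case 0
  then show ?case using Fn_good[of 1] unfolding good_def by (simp add: Fn_0)
next
  case (Suc n)
  have "ereal (Fn (Suc (Suc n)) \<gamma> x s) = rhs (Fn (Suc n)) \<gamma> x s"
    using rhs_T[OF Fn_good[of "Suc n"] Suc.prems] by (simp add: Fn_Suc)
  also have "\<dots> \<le> rhs (Fn n) \<gamma> x s"
    by (rule rhs_mono[OF _ Suc.prems]) (rule Suc.IH)
  also have "\<dots> = ereal (Fn (Suc n) \<gamma> x s)"
    using rhs_T[OF Fn_good Suc.prems] by (simp add: Fn_Suc)
  finally show ?case by simp
qed

lemma Fn_decseq: "x \<in> X \<Longrightarrow> \<gamma> \<in> orth \<Longrightarrow> decseq (\<lambda>n. Fn n \<gamma> x s)"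
  by (rule decseq_SucI) (rule Fn_dec)

definition Flim :: "real^'i \<Rightarrow> 'x \<Rightarrow> 's \<Rightarrow> real" where
  "Flim \<gamma> x s = lim (\<lambda>n. Fn n \<gamma> x s)"

lemma Fn_lim:
  assumes x: "x \<in> X" and \<gamma>: "\<gamma> \<in> orth"
  shows "(\<lambda>n. Fn n \<gamma> x s) \<longlonglongrightarrow> Flim \<gamma> x s"
proof -
  obtain a where a: "feas x s a" using standing[OF x] by blast
  have "\<forall>n. Vf r a x s + (\<Sum>i\<in>UNIV. \<gamma> $ i * Vf (g i) a x s) \<le> Fn n \<gamma> x s"
    using Fn_good x \<gamma> a unfolding good_def by blast
  from decseq_convergent[OF Fn_decseq[OF x \<gamma>] this] obtain l where "(\<lambda>n. Fn n \<gamma> x s) \<longlonglongrightarrow> l" by blast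
  then show ?thesis unfolding Flim_def by (simp add: limI)
qed

lemma Flim_le: "x \<in> X \<Longrightarrow> \<gamma> \<in> orth \<Longrightarrow> Flim \<gamma> x s \<le> Fn n \<gamma> x s"
  using Fn_lim decseq_ge Fn_decseq by blast

lemma Flim_good: "good Flim"
  unfolding good_def
proof (intro ballI allI conjI impI)
  fix x s \<gamma> assume x: "x \<in> X" and \<gamma>: "\<gamma> \<in> orth"
  show "Flim \<gamma> x s \<le> U \<gamma> x s" using Flim_le[OF x \<gamma>, of s 0] by (simp add: Fn_0)
  fix a assume a: "feas x s a"
  show "Vf r a x s + (\<Sum>i\<in>UNIV. \<gamma> $ i * Vf (g i) a x s) \<le> Flim \<gamma> x s"
    by (rule LIMSEQ_le_const[OF Fn_lim[OF x \<gamma>]]) (use Fn_good x \<gamma> a in \<open>auto simp: good_def\<close>)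
qed

lemma Flim_cvx: "cvx Flim"
  unfolding cvx_def convex_on_def
proof (intro ballI allI conjI impI convex_orth)
  fix x s \<gamma>1 \<gamma>2 and u v :: real
  assume x: "x \<in> X" and g1: "\<gamma>1 \<in> orth" and g2: "\<gamma>2 \<in> orth" and u: "0 \<le> u" "0 \<le> v" "u + v = 1"
  have gu: "u *\<^sub>R \<gamma>1 + v *\<^sub>R \<gamma>2 \<in> orth"
    using convex_orth g1 g2 u unfolding convex_def by blast
  show "Flim (u *\<^sub>R \<gamma>1 + v *\<^sub>R \<gamma>2) x s \<le> u * Flim \<gamma>1 x s + v * Flim \<gamma>2 x s"
  proof (rule LIMSEQ_le[OF Fn_lim[OF x gu]])
    show "(\<lambda>n. u * Fn n \<gamma>1 x s + v * Fn n \<gamma>2 x s) \<longlonglongrightarrow> u * Flim \<gamma>1 x s + v * Flim \<gamma>2 x s"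
      by (intro tendsto_intros Fn_lim x g1 g2)
    show "\<exists>N. \<forall>n\<ge>N. Fn n (u *\<^sub>R \<gamma>1 + v *\<^sub>R \<gamma>2) x s \<le> u * Fn n \<gamma>1 x s + v * Fn n \<gamma>2 x s"
      using Fn_cvx x g1 g2 u unfolding cvx_def convex_on_def by blast
  qed
qed

lemma Flim_lip: "lip Flim"
  unfolding lip_def
proof (intro ballI allI)
  fix x s \<gamma>1 \<gamma>2 assume x: "x \<in> X" and g1: "\<gamma>1 \<in> orth" and g2: "\<gamma>2 \<in> orth"
  show "\<bar>Flim \<gamma>1 x s - Flim \<gamma>2 x s\<bar> \<le> L * (\<Sum>i\<in>UNIV. \<bar>\<gamma>1 $ i - \<gamma>2 $ i\<bar>)"
  proof (rule LIMSEQ_le_const2)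
    show "(\<lambda>n. \<bar>Fn n \<gamma>1 x s - Fn n \<gamma>2 x s\<bar>) \<longlonglongrightarrow> \<bar>Flim \<gamma>1 x s - Flim \<gamma>2 x s\<bar>"
      by (intro tendsto_intros Fn_lim x g1 g2)
    show "\<exists>N. \<forall>n\<ge>N. \<bar>Fn n \<gamma>1 x s - Fn n \<gamma>2 x s\<bar> \<le> L * (\<Sum>i\<in>UNIV. \<bar>\<gamma>1 $ i - \<gamma>2 $ i\<bar>)"
      using Fn_lip x g1 g2 unfolding lip_def by blast
  qed
qed

lemma hF_tendsto:
  assumes x: "x \<in> X" and \<gamma>: "\<gamma> \<in> orth" and l: "lam \<in> orth" and aA: "a \<in> A"
  shows "(\<lambda>n. hF (Fn n) \<gamma> x s a lam) \<longlonglongrightarrow> hF Flim \<gamma> x s a lam"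
  unfolding hF_def
  by (intro tendsto_intros Fn_lim \<zeta>_X[OF x aA] orth_add[OF \<gamma> l])

lemma Flim_fix:
  assumes x: "x \<in> X" and \<gamma>: "\<gamma> \<in> orth"
  shows "ereal (Flim \<gamma> x s) = rhs Flim \<gamma> x s"
proof (rule antisym)
  have rT: "rhs Flim \<gamma> x s = ereal (T Flim \<gamma> x s)" by (rule rhs_T[OF Flim_good x \<gamma>])
  have "T Flim \<gamma> x s \<le> Fn (Suc n) \<gamma> x s" for n
  proof -
    have "ereal (T Flim \<gamma> x s) = rhs Flim \<gamma> x s" using rT by simp
    also have "\<dots> \<le> rhs (Fn n) \<gamma> x s" by (rule rhs_mono[OF _ x \<gamma>]) (rule Flim_le)
    also have "\<dots> = ereal (Fn (Suc n) \<gamma> x s)" using rhs_T[OF Fn_good x \<gamma>] by (simp add: Fn_Suc)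
    finally show ?thesis by simp
  qed
  then have "T Flim \<gamma> x s \<le> Flim \<gamma> x s"
    using LIMSEQ_le_const[OF LIMSEQ_Suc[OF Fn_lim[OF x \<gamma>]], of "T Flim \<gamma> x s" s] by auto
  then show "rhs Flim \<gamma> x s \<le> ereal (Flim \<gamma> x s)" using rT by simp
  show "ereal (Flim \<gamma> x s) \<le> rhs Flim \<gamma> x s"
  proof (rule ccontr)
    assume "\<not> ereal (Flim \<gamma> x s) \<le> rhs Flim \<gamma> x s"
    then have lt: "rhs Flim \<gamma> x s < ereal (Flim \<gamma> x s)" by simp
    have "\<forall>a\<in>A_tilde A p x s. \<exists>lam\<in>orth. hF Flim \<gamma> x s a lam < Flim \<gamma> x s"
    proof
      fix a assume a: "a \<in> A_tilde A p x s"
      have "(INF lam\<in>orth. ereal (hF Flim \<gamma> x s a lam)) \<le> rhs Flim \<gamma> x s"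
        unfolding rhs_eq by (rule SUP_upper[OF a])
      also note lt
      finally show "\<exists>lam\<in>orth. hF Flim \<gamma> x s a lam < Flim \<gamma> x s" unfolding INF_less_iff by auto
    qed
    then obtain lf where lf: "\<And>a. a \<in> A_tilde A p x s \<Longrightarrow> lf a \<in> orth \<and> hF Flim \<gamma> x s a (lf a) < Flim \<gamma> x s"
      by metis
    have "\<forall>a\<in>A_tilde A p x s. eventually (\<lambda>n. hF (Fn n) \<gamma> x s a (lf a) < Flim \<gamma> x s) sequentially"
    proof
      fix a assume a: "a \<in> A_tilde A p x s"
      have aA: "a \<in> A" using a A_tilde_sub by blast
      show "eventually (\<lambda>n. hF (Fn n) \<gamma> x s a (lf a) < Flim \<gamma> x s) sequentially"
        by (rule order_tendstoD(2)[OF hF_tendsto[OF x \<gamma> _ aA]]) (use lf[OF a] in auto)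
    qed
    from eventually_ball_finite[OF A_tilde_fin this]
    obtain n where n: "\<And>a. a \<in> A_tilde A p x s \<Longrightarrow> hF (Fn n) \<gamma> x s a (lf a) < Flim \<gamma> x s"
      unfolding eventually_sequentially by blast
    obtain a where a: "a \<in> A_tilde A p x s" and Tle: "\<And>lam. lam \<in> orth \<Longrightarrow> T (Fn n) \<gamma> x s \<le> hF (Fn n) \<gamma> x s a lam"
      using T_le_hF[OF Fn_good x \<gamma>] by blast
    have "Fn (Suc n) \<gamma> x s \<le> hF (Fn n) \<gamma> x s a (lf a)" unfolding Fn_Suc using Tle lf[OF a] by blast
    also have "\<dots> < Flim \<gamma> x s" by (rule n[OF a])
    finally show False using Flim_le[OF x \<gamma>, of s "Suc n"] by simp
  qed
qed

end


lemma closed_Bk: "closed (Bk k :: (real^'i::finite) set)"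
proof -
  have "Bk k = {\<gamma>::real^'i. \<forall>i. 0 \<le> \<gamma> $ i} \<inter> {\<gamma>. \<forall>i. \<gamma> $ i \<le> k}"
    by (auto simp: Bk_def)
  also have "closed \<dots>"
    using closed_interval_left_cart[of "\<chi> i. k"] closed_positive_orthant by (intro closed_Int) auto
  finally show ?thesis .
qed

lemma Bk_lebesgue: "Bk k \<in> sets (lebesgue :: (real^'i::finite) measure)"
proof -
  have "Bk k \<in> sets (lborel :: (real^'i) measure)" using borel_closed[OF closed_Bk[of k]] by simp
  then show ?thesis by simp
qed

lemma sum_abs_le_norm: "(\<Sum>i\<in>UNIV. \<bar>(x::real^'i::finite) $ i\<bar>) \<le> real CARD('i) * norm x"
proof -
  have "(\<Sum>i\<in>UNIV. \<bar>x $ i\<bar>) \<le> (\<Sum>i\<in>(UNIV::'i set). norm x)"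
    by (rule sum_mono) (rule component_le_norm_cart)
  then show ?thesis by simp
qed

lemma Linf_bound:
  fixes f :: "real^'i::finite \<Rightarrow> real"
  assumes lip: "\<And>\<gamma>1 \<gamma>2. \<gamma>1 \<in> Bk k \<Longrightarrow> \<gamma>2 \<in> Bk k \<Longrightarrow> \<bar>f \<gamma>1 - f \<gamma>2\<bar> \<le> C * (\<Sum>i\<in>UNIV. \<bar>\<gamma>1 $ i - \<gamma>2 $ i\<bar>)"
    and C: "0 \<le> C"
    and bd: "\<And>\<gamma>. \<gamma> \<in> Bk k \<Longrightarrow> \<bar>f \<gamma>\<bar> \<le> M"
  shows "Linf_norm k f \<le> ereal M"
proof -
  have dd: "dist (f x) (f y) \<le> (C * real CARD('i)) * dist x y" if "x \<in> Bk k" "y \<in> Bk k" for x y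
  proof -
    have "\<bar>f x - f y\<bar> \<le> C * (\<Sum>i\<in>UNIV. \<bar>(x - y) $ i\<bar>)" using lip that by simp
    also have "\<dots> \<le> C * (real CARD('i) * norm (x - y))" by (rule mult_left_mono[OF sum_abs_le_norm C])
    finally show ?thesis by (simp add: dist_norm dist_real_def mult_ac)
  qed
  have "(C * real CARD('i))-lipschitz_on (Bk k) f"
    unfolding lipschitz_on_def using dd C by auto
  then have "continuous_on (Bk k) f" by (rule lipschitz_on_continuous_on)
  then have m: "f \<in> borel_measurable (lebesgue_on (Bk k))"
    by (rule continuous_imp_measurable_on_sets_lebesgue[OF _ Bk_lebesgue])
  have m2: "(\<lambda>\<gamma>. ereal \<bar>f \<gamma>\<bar>) \<in> borel_measurable (lebesgue_on (Bk k))"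
    using m by measurable
  show ?thesis unfolding Linf_norm_def
    by (rule esssup_I[OF m2]) (rule AE_I2, use bd in \<open>auto simp: space_restrict_space\<close>)
qed


lemma summable_lin_geo: "summable (\<lambda>k::nat. (real k + 1) * (1/2) ^ k)"
proof (rule summable_ratio_test[where c="3/4" and N=1])
  fix n :: nat assume n: "1 \<le> n"
  have "(real (Suc n) + 1) * (1/2) ^ Suc n = ((real n + 2) / 2) * (1/2) ^ n" by simp
  also have "\<dots> \<le> (3/4 * (real n + 1)) * (1/2) ^ n"
    using n by (intro mult_right_mono) auto
  finally show "norm ((real (Suc n) + 1) * (1/2) ^ Suc n) \<le> 3/4 * norm ((real n + 1) * (1/2) ^ n)"
    by simp
qed simp

context model begin

lemma Flim_abs: "x \<in> X \<Longrightarrow> \<gamma> \<in> orth \<Longrightarrow> \<bar>Flim \<gamma> x s\<bar> \<le> (1 + (\<Sum>i\<in>UNIV. \<gamma> $ i)) * L"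
proof -
  assume x: "x \<in> X" and \<gamma>: "\<gamma> \<in> orth"
  obtain a where a: "feas x s a" using standing[OF x] by blast
  have ad: "a \<in> adm_plans A p \<zeta> x s" by (rule feas_adm[OF a])
  have up: "Flim \<gamma> x s \<le> (1 + (\<Sum>i\<in>UNIV. \<gamma> $ i)) * L" using Flim_good x \<gamma> unfolding good_def U_def by blast
  have lo1: "Vf r a x s + (\<Sum>i\<in>UNIV. \<gamma> $ i * Vf (g i) a x s) \<le> Flim \<gamma> x s"
    using Flim_good x \<gamma> a unfolding good_def by blast
  have v0: "- L \<le> Vf r a x s" using V_bdd[OF r_bdd ad x] SR_div by simp
  have vi: "\<gamma> $ i * (- L) \<le> \<gamma> $ i * Vf (g i) a x s" for i
  proof -
    have "- L \<le> Vf (g i) a x s" using V_bdd[OF g_bdd ad x, of i] SG_div[of i] by (simp add: abs_le_iff)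
    then show ?thesis using \<gamma> by (intro mult_left_mono) (auto simp: orth_iff)
  qed
  have "(\<Sum>i\<in>UNIV. \<gamma> $ i * (- L)) = - ((\<Sum>i\<in>UNIV. \<gamma> $ i) * L)"
    by (simp add: sum_negf sum_distrib_right)
  then have "- ((1 + (\<Sum>i\<in>UNIV. \<gamma> $ i)) * L) = - L + (\<Sum>i\<in>UNIV. \<gamma> $ i * (- L))"
    by (simp add: algebra_simps)
  also have "\<dots> \<le> Vf r a x s + (\<Sum>i\<in>UNIV. \<gamma> $ i * Vf (g i) a x s)"
    using v0 vi by (intro add_mono sum_mono) auto
  finally show ?thesis using lo1 up by linarith
qed

lemma Bk_orth: "\<gamma> \<in> Bk k \<Longrightarrow> \<gamma> \<in> orth"
  by (simp add: Bk_def orth_iff)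

lemma Bk_sum: "(\<gamma>::real^'i) \<in> Bk k \<Longrightarrow> (\<Sum>i\<in>UNIV. \<gamma> $ i) \<le> real CARD('i) * k"
proof -
  assume "\<gamma> \<in> Bk k"
  then have "\<And>i. \<gamma> $ i \<le> k" by (simp add: Bk_def)
  then show ?thesis using sum_bounded_above[of UNIV "\<lambda>i. \<gamma> $ i" k] by simp
qed

lemma Flim_Linf: "x \<in> X \<Longrightarrow> Linf_norm k (\<lambda>\<gamma>. Flim \<gamma> x s) \<le> ereal ((1 + real CARD('i) * k) * L)"
proof -
  assume x: "x \<in> X"
  show ?thesis
  proof (rule Linf_bound)
    show "\<bar>Flim \<gamma>1 x s - Flim \<gamma>2 x s\<bar> \<le> L * (\<Sum>i\<in>UNIV. \<bar>\<gamma>1 $ i - \<gamma>2 $ i\<bar>)" if "\<gamma>1 \<in> Bk k" "\<gamma>2 \<in> Bk k" for \<gamma>1 \<gamma>2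
      using Flim_lip x Bk_orth[OF that(1)] Bk_orth[OF that(2)] unfolding lip_def by blast
    show "0 \<le> L" by (rule L_nn)
    show "\<bar>Flim \<gamma> x s\<bar> \<le> (1 + real CARD('i) * k) * L" if "\<gamma> \<in> Bk k" for \<gamma>
    proof -
      have "\<bar>Flim \<gamma> x s\<bar> \<le> (1 + (\<Sum>i\<in>UNIV. \<gamma> $ i)) * L" by (rule Flim_abs[OF x Bk_orth[OF that]])
      also have "\<dots> \<le> (1 + real CARD('i) * k) * L"
        using Bk_sum[OF that] L_nn by (intro mult_right_mono) auto
      finally show ?thesis .
    qed
  qed
qed

lemma Flim_Mspace:
  assumes xenum: "bij_betw xenum (enum_index X) X"
  shows "Flim \<in> Mspace X senum xenum"
  unfolding Mspace_def
proof (intro CollectI conjI ballI allI impI)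
  fix x s and k :: nat assume x: "x \<in> X"
  show "Linf_norm (real k) (\<lambda>\<gamma>. Flim \<gamma> x s) < \<infinity>"
    using Flim_Linf[OF x, of "real k" s] by (auto intro: le_less_trans)
next
  define C where "C k = (1 + real CARD('i) * real (Suc k)) * L" for k :: nat
  define c where "c k = (1/2) ^ Suc k * C k" for k
  have C_nn: "0 \<le> C k" for k unfolding C_def using L_nn by simp
  have c_nn: "0 \<le> c k" for k unfolding c_def using C_nn by simp
  have sc: "summable c"
  proof (rule summable_comparison_test[where g="\<lambda>k. ((1 + real CARD('i)) * L) * ((real k + 1) * (1/2) ^ k)"])
    show "summable (\<lambda>k. ((1 + real CARD('i)) * L) * ((real k + 1) * (1/2) ^ k))"
      by (intro summable_mult summable_lin_geo)
    show "\<exists>N. \<forall>n\<ge>N. norm (c n) \<le> (1 + real CARD('i)) * L * ((real n + 1) * (1 / 2) ^ n)"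
    proof (intro exI allI impI)
      fix n :: nat
      have h1: "1 + real CARD('i) * real (Suc n) \<le> (1 + real CARD('i)) * (real n + 1)"
        by (simp add: algebra_simps)
      have "C n = L * (1 + real CARD('i) * real (Suc n))" by (simp add: C_def mult.commute)
      also have "\<dots> \<le> L * ((1 + real CARD('i)) * (real n + 1))" by (rule mult_left_mono[OF h1 L_nn])
      finally have "C n \<le> (1 + real CARD('i)) * L * (real n + 1)" by (simp add: mult_ac)
      then have "c n \<le> (1/2) ^ Suc n * ((1 + real CARD('i)) * L * (real n + 1))"
        unfolding c_def by (intro mult_left_mono) auto
      also have "\<dots> \<le> (1 + real CARD('i)) * L * ((real n + 1) * (1 / 2) ^ n)"
        using L_nn by (simp add: mult_ac)
      finally show "norm (c n) \<le> (1 + real CARD('i)) * L * ((real n + 1) * (1 / 2) ^ n)"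
        using c_nn by simp
    qed
  qed
  define M1 where "M1 = suminf c"
  have M1_nn: "0 \<le> M1" unfolding M1_def using sc c_nn by (simp add: suminf_nonneg)
  have inner: "(\<Sum>k. ennreal ((1/2) ^ Suc k) * e2ennreal (Linf_norm (real (Suc k)) (\<lambda>\<gamma>. Flim \<gamma> x s))) \<le> ennreal M1"
    if x: "x \<in> X" for x s
  proof -
    have "(\<Sum>k. ennreal ((1/2) ^ Suc k) * e2ennreal (Linf_norm (real (Suc k)) (\<lambda>\<gamma>. Flim \<gamma> x s))) \<le> (\<Sum>k. ennreal (c k))"
    proof (rule suminf_le[OF _ summableI summableI])
      fix k
      have "e2ennreal (Linf_norm (real (Suc k)) (\<lambda>\<gamma>. Flim \<gamma> x s)) \<le> e2ennreal (ereal (C k))"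
        unfolding C_def by (rule e2ennreal_mono[OF Flim_Linf[OF x]])
      then have "ennreal ((1/2) ^ Suc k) * e2ennreal (Linf_norm (real (Suc k)) (\<lambda>\<gamma>. Flim \<gamma> x s)) \<le> ennreal ((1/2) ^ Suc k) * ennreal (C k)"
        by (intro mult_left_mono) auto
      also have "\<dots> = ennreal (c k)" unfolding c_def by (subst ennreal_mult) (auto simp: C_nn)
      finally show "ennreal ((1/2) ^ Suc k) * e2ennreal (Linf_norm (real (Suc k)) (\<lambda>\<gamma>. Flim \<gamma> x s)) \<le> ennreal (c k)" .
    qed
    also have "\<dots> = ennreal M1" unfolding M1_def by (rule suminf_ennreal2[OF c_nn sc])
    finally show ?thesis .
  qed
  define M2 where "M2 = (\<Sum>j. (1/2::real) ^ j * M1)"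
  have s2: "summable (\<lambda>j. (1/2::real) ^ j * M1)" by (intro summable_mult2 summable_geometric) simp
  have M2_nn: "0 \<le> M2" unfolding M2_def using s2 M1_nn by (intro suminf_nonneg) auto
  have mid: "(\<Sum>j. (if j \<in> enum_index X then ennreal ((1/2) ^ j) else 0) *
           (\<Sum>k. ennreal ((1/2) ^ Suc k) * e2ennreal (Linf_norm (real (Suc k)) (\<lambda>\<gamma>. Flim \<gamma> (xenum j) s)))) \<le> ennreal M2"
    for s
  proof -
    have "(\<Sum>j. (if j \<in> enum_index X then ennreal ((1/2) ^ j) else 0) *
           (\<Sum>k. ennreal ((1/2) ^ Suc k) * e2ennreal (Linf_norm (real (Suc k)) (\<lambda>\<gamma>. Flim \<gamma> (xenum j) s))))
        \<le> (\<Sum>j. ennreal ((1/2) ^ j * M1))"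
    proof (rule suminf_le[OF _ summableI summableI])
      fix j
      show "(if j \<in> enum_index X then ennreal ((1/2) ^ j) else 0) *
           (\<Sum>k. ennreal ((1/2) ^ Suc k) * e2ennreal (Linf_norm (real (Suc k)) (\<lambda>\<gamma>. Flim \<gamma> (xenum j) s)))
          \<le> ennreal ((1/2) ^ j * M1)"
      proof (cases "j \<in> enum_index X")
        case True
        then have "xenum j \<in> X" using bij_betw_apply[OF xenum] by blast
        then have "ennreal ((1/2) ^ j) * (\<Sum>k. ennreal ((1/2) ^ Suc k) * e2ennreal (Linf_norm (real (Suc k)) (\<lambda>\<gamma>. Flim \<gamma> (xenum j) s)))
            \<le> ennreal ((1/2) ^ j) * ennreal M1"
          by (intro mult_left_mono inner) auto
        then show ?thesis using True M1_nn by (simp add: ennreal_mult)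
      qed simp
    qed
    also have "\<dots> = ennreal M2" unfolding M2_def
      by (rule suminf_ennreal2[OF _ s2]) (simp add: M1_nn)
    finally show ?thesis .
  qed
  have "Mnorm X senum xenum Flim \<le> (\<Sum>i\<in>{1..CARD('s)}. ennreal ((1/2) ^ i) * ennreal M2)"
    unfolding Mnorm_def by (intro sum_mono mult_left_mono mid) auto
  also have "\<dots> = (\<Sum>i\<in>{1..CARD('s)}. ennreal ((1/2) ^ i * M2))"
    by (rule sum.cong) (simp_all add: ennreal_mult M2_nn)
  also have "\<dots> = ennreal (\<Sum>i\<in>{1..CARD('s)}. (1/2) ^ i * M2)"
    by (rule sum_ennreal) (simp add: M2_nn)
  also have "\<dots> < \<infinity>" by simp
  finally show "Mnorm X senum xenum Flim < \<infinity>" .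
qed

end


lemma tail_zero:
  fixes a :: "nat \<Rightarrow> real"
  assumes "summable a"
  shows "(\<lambda>T. \<Sum>n. a (n + T)) \<longlonglongrightarrow> 0"
proof (rule LIMSEQ_I)
  fix r :: real assume "0 < r"
  from suminf_exist_split[OF this assms] show "\<exists>N. \<forall>n\<ge>N. norm ((\<Sum>i. a (i + n)) - 0) < r" by simp
qed

lemma conv_zero:
  fixes a :: "nat \<Rightarrow> real"
  assumes a: "summable a" "\<And>n. 0 \<le> a n" and b: "0 \<le> b" "b < 1"
  shows "(\<lambda>T. \<Sum>j<T. b ^ (T - j) * a j) \<longlonglongrightarrow> 0"
proof -
  define c where "c T = (\<Sum>j\<le>T. a j * b ^ (T - j))" for T
  have sa: "summable (\<lambda>k. norm (a k))" using a by simp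
  have sb: "summable (\<lambda>k. norm (b ^ k))" using b by (simp add: summable_geometric)
  have "summable c" unfolding c_def by (rule summable_Cauchy_product[OF sa sb])
  then have c0: "c \<longlonglongrightarrow> 0" by (rule summable_LIMSEQ_zero)
  have le: "(\<Sum>j<T. b ^ (T - j) * a j) \<le> c T" for T
  proof -
    have "(\<Sum>j<T. b ^ (T - j) * a j) \<le> (\<Sum>j\<le>T. b ^ (T - j) * a j)"
      by (rule sum_mono2) (use a b in auto)
    then show ?thesis unfolding c_def by (simp add: mult.commute)
  qed
  have ge: "0 \<le> (\<Sum>j<T. b ^ (T - j) * a j)" for T
    using a b by (intro sum_nonneg) auto
  show ?thesis
    by (rule tendsto_sandwich[OF _ _ tendsto_const c0]) (use le ge in auto)
qed

fun gp :: "('x \<Rightarrow> 'a \<Rightarrow> 's \<Rightarrow> 'x) \<Rightarrow> ('x \<Rightarrow> 'g \<Rightarrow> 's \<Rightarrow> 'a) \<Rightarrow> (('s \<times> 'a) list \<Rightarrow> 'g) \<Rightarrow> 'x \<Rightarrow> 'g::plus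
    \<Rightarrow> 's list \<Rightarrow> 'x \<times> 'g \<times> ('s \<times> 'a) list" where
  "gp \<zeta> ch lv x0 g0 [] = (x0, g0, [])"
| "gp \<zeta> ch lv x0 g0 [s] = (x0, g0, [(s, ch x0 g0 s)])"
| "gp \<zeta> ch lv x0 g0 (s # s' # h) =
    (let t = gp \<zeta> ch lv x0 g0 (s' # h); x = \<zeta> (fst t) (snd (hd (snd (snd t)))) s';
         gn = fst (snd t) + lv (snd (snd t)) in (x, gn, (s, ch x gn s) # snd (snd t)))"

definition gpl :: "('x \<Rightarrow> 'a \<Rightarrow> 's \<Rightarrow> 'x) \<Rightarrow> ('x \<Rightarrow> 'g \<Rightarrow> 's \<Rightarrow> 'a) \<Rightarrow> (('s \<times> 'a) list \<Rightarrow> 'g) \<Rightarrow> 'x \<Rightarrow> 'g::plus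
    \<Rightarrow> 's list \<Rightarrow> 'a" where
  "gpl \<zeta> ch lv x0 g0 k = snd (hd (snd (snd (gp \<zeta> ch lv x0 g0 k))))"

lemma gpl_Cons: "gpl \<zeta> ch lv x0 g0 (s # k) = ch (fst (gp \<zeta> ch lv x0 g0 (s # k))) (fst (snd (gp \<zeta> ch lv x0 g0 (s # k)))) s"
  by (cases k) (simp_all add: gpl_def Let_def)

lemma gp_ph: "snd (snd (gp \<zeta> ch lv x0 g0 k)) = post_hist (gpl \<zeta> ch lv x0 g0) k"
proof (induction \<zeta> ch lv x0 g0 k rule: gp.induct)
  case (1 \<zeta> ch lv x0 g0)
  then show ?case by simp
next
  case (2 \<zeta> ch lv x0 g0 s)
  show ?case by (simp only: post_hist.simps gpl_Cons) simp
next
  case (3 \<zeta> ch lv x0 g0 s s' h)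
  have "snd (snd (gp \<zeta> ch lv x0 g0 (s # s' # h))) = (s, gpl \<zeta> ch lv x0 g0 (s # s' # h)) # snd (snd (gp \<zeta> ch lv x0 g0 (s' # h)))"
    by (simp only: gpl_Cons) (simp add: Let_def)
  then show ?case using 3 by (simp only: post_hist.simps)
qed

lemma gp_st: "k \<noteq> [] \<Longrightarrow> fst (gp \<zeta> ch lv x0 g0 k) = state_path \<zeta> (gpl \<zeta> ch lv x0 g0) x0 k"
proof (induction \<zeta> ch lv x0 g0 k rule: gp.induct)
  case (3 \<zeta> ch lv x0 g0 s s' h)
  have "fst (gp \<zeta> ch lv x0 g0 (s # s' # h)) = \<zeta> (fst (gp \<zeta> ch lv x0 g0 (s' # h))) (gpl \<zeta> ch lv x0 g0 (s' # h)) s'"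
    by (simp add: Let_def gpl_def)
  then show ?case using 3 by simp
qed simp_all

lemma gp_gm_single: "fst (snd (gp \<zeta> ch lv x0 g0 [s])) = g0" by simp

lemma gp_gm_Cons: "k \<noteq> [] \<Longrightarrow> fst (snd (gp \<zeta> ch lv x0 g0 (s # k))) = fst (snd (gp \<zeta> ch lv x0 g0 k)) + lv (post_hist (gpl \<zeta> ch lv x0 g0) k)"
proof (cases k)
  case (Cons s' h)
  show ?thesis unfolding Cons by (simp add: Let_def gp_ph del: post_hist.simps)
qed simp

lemma post_hist_len: "length (post_hist a h) = length h"
  by (induction h) auto


locale dual = model P \<beta> A X \<zeta> p r g gbar
  for P :: "'s::finite \<Rightarrow> 's \<Rightarrow> real" and \<beta> :: real and A :: "'a set" and X :: "'x set"
    and \<zeta> p r and g :: "'i::finite \<Rightarrow> 'x \<Rightarrow> 'a \<Rightarrow> 's \<Rightarrow> real" and gbar +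
  fixes F :: "real^'i \<Rightarrow> 'x \<Rightarrow> 's \<Rightarrow> real" and lam :: "'i \<Rightarrow> ('s \<times> 'a) list \<Rightarrow> real"
    and \<gamma>0 :: "real^'i" and x0 :: 'x and s0 :: 's
  assumes F_up: "\<And>x s \<gamma>. x \<in> X \<Longrightarrow> \<gamma> \<in> nonneg_orthant \<Longrightarrow> F \<gamma> x s \<le> (1 + (\<Sum>i\<in>UNIV. \<gamma> $ i)) * Lconst \<beta> X A r g"
    and F_eq: "\<And>x s \<gamma>. x \<in> X \<Longrightarrow> \<gamma> \<in> nonneg_orthant \<Longrightarrow> ereal (F \<gamma> x s) = bellman_rhs \<beta> P A p \<zeta> r g gbar F \<gamma> x s"
    and \<gamma>0: "\<gamma>0 \<in> nonneg_orthant" and x0: "x0 \<in> X" and lam: "lam \<in> Lambda_set \<beta> P A s0"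
begin

definition ch :: "'x \<Rightarrow> real^'i \<Rightarrow> 's \<Rightarrow> 'a" where
  "ch x \<gamma> s = (SOME a. a \<in> A_tilde A p x s \<and> (\<forall>\<mu>\<in>orth. F \<gamma> x s \<le> hF F \<gamma> x s a \<mu>))"

definition lv :: "('s \<times> 'a) list \<Rightarrow> real^'i" where
  "lv ph = (\<chi> i. lam i ph)"

definition pl :: "'s list \<Rightarrow> 'a" where
  "pl = gpl \<zeta> ch lv x0 \<gamma>0"

definition gm :: "'s list \<Rightarrow> real^'i" where
  "gm k = fst (snd (gp \<zeta> ch lv x0 \<gamma>0 k))"

definition st :: "'s list \<Rightarrow> 'x" where
  "st k = state_path \<zeta> pl x0 k"

lemma lam_nn: "0 \<le> lam i ht"
  using lam by (simp add: Lambda_set_def)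

lemma lv_orth: "lv ph \<in> orth"
  by (simp add: lv_def orth_iff lam_nn)

lemma lv_nth[simp]: "lv ph $ i = lam i ph"
  by (simp add: lv_def)

lemma ch_ok:
  assumes x: "x \<in> X" and \<gamma>: "\<gamma> \<in> orth"
  shows "ch x \<gamma> s \<in> A_tilde A p x s \<and> (\<forall>\<mu>\<in>orth. F \<gamma> x s \<le> hF F \<gamma> x s (ch x \<gamma> s) \<mu>)"
proof -
  obtain a where a: "a \<in> A_tilde A p x s" and eq: "rhs F \<gamma> x s = (INF \<mu>\<in>orth. ereal (hF F \<gamma> x s a \<mu>))"
    using rhs_attained[OF x] by blast
  have "\<forall>\<mu>\<in>orth. F \<gamma> x s \<le> hF F \<gamma> x s a \<mu>"
  proof
    fix \<mu> assume \<mu>: "\<mu> \<in> orth"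
    have "ereal (F \<gamma> x s) = (INF \<mu>\<in>orth. ereal (hF F \<gamma> x s a \<mu>))" using F_eq[OF x \<gamma>] eq by simp
    also have "\<dots> \<le> ereal (hF F \<gamma> x s a \<mu>)" by (rule INF_lower[OF \<mu>])
    finally show "F \<gamma> x s \<le> hF F \<gamma> x s a \<mu>" by simp
  qed
  with a have "\<exists>a. a \<in> A_tilde A p x s \<and> (\<forall>\<mu>\<in>orth. F \<gamma> x s \<le> hF F \<gamma> x s a \<mu>)" by blast
  then show ?thesis unfolding ch_def by (rule someI_ex)
qed

lemma pl_Cons: "pl (s # k) = ch (st (s # k)) (gm (s # k)) s"
  unfolding pl_def st_def gm_def using gpl_Cons gp_st[of "s # k"] by (metis list.distinct(1))

lemma pl_hd: "k \<noteq> [] \<Longrightarrow> pl k = ch (st k) (gm k) (hd k)"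
  by (cases k) (auto simp: pl_Cons)

lemma gm_single: "gm [s] = \<gamma>0" by (simp add: gm_def)

lemma gm_Cons: "k \<noteq> [] \<Longrightarrow> gm (s # k) = gm k + lv (post_hist pl k)"
  unfolding gm_def pl_def by (rule gp_gm_Cons)

lemma st_single: "st [s] = x0" by (simp add: st_def)

lemma st_Cons: "k \<noteq> [] \<Longrightarrow> st (s # k) = \<zeta> (st k) (pl k) (hd k)"
  unfolding st_def by (rule state_path_Cons)

lemma inv0: "k \<in> hists s0 \<Longrightarrow> st k \<in> X \<and> gm k \<in> orth"
proof (induction rule: hists_induct)
  case base
  then show ?case using x0 \<gamma>0 by (simp add: st_single gm_single)
next
  case (step s k)
  have ne: "k \<noteq> []" using hists_ne[OF step(1)] .
  have "pl k \<in> A"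
    using ch_ok[of "st k" "gm k" "hd k"] step pl_hd[OF ne] A_tilde_sub by auto
  then show ?case using step \<zeta>_X ne lv_orth orth_add by (simp add: st_Cons gm_Cons)
qed

lemma inv:
  assumes "k \<in> hists s0"
  shows "st k \<in> X" "gm k \<in> orth" "pl k \<in> A_tilde A p (st k) (hd k)"
    "\<And>\<mu>. \<mu> \<in> orth \<Longrightarrow> F (gm k) (st k) (hd k) \<le> hF F (gm k) (st k) (hd k) (pl k) \<mu>"
  using inv0[OF assms] ch_ok[of "st k" "gm k" "hd k"] pl_hd[OF hists_ne[OF assms]] by auto

lemma pl_A: "k \<in> hists s0 \<Longrightarrow> pl k \<in> A"
  using inv(3) A_tilde_sub by blast

lemma pl_adm: "pl \<in> adm_plans A p \<zeta> x0 s0"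
  unfolding adm_plans_def using inv(3) by (auto simp: st_def)

end


context dual begin

definition R :: "'s list \<Rightarrow> real" where "R k = path_fun \<zeta> pl x0 r k"
definition G :: "'i \<Rightarrow> 's list \<Rightarrow> real" where "G i k = path_fun \<zeta> pl x0 (g i) k"
definition CG :: "'i \<Rightarrow> 's list \<Rightarrow> real" where "CG i k = cont_value \<beta> P (G i) k"
definition Lm :: "'i \<Rightarrow> 's list \<Rightarrow> real" where "Lm i k = lam i (post_hist pl k)"
definition Ls :: "'s list \<Rightarrow> real" where "Ls k = (\<Sum>i\<in>UNIV. Lm i k)"
definition Q :: "'s list \<Rightarrow> real" where "Q k = (\<Sum>i\<in>UNIV. Lm i k * (CG i k - gbar i))"
definition Kc :: real where "Kc = L + (\<Sum>i\<in>UNIV. \<bar>gbar i\<bar>)"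
definition aa :: "nat \<Rightarrow> real" where "aa t = \<beta> ^ t * Ex P [s0] t Ls"

lemma Lm_nn: "0 \<le> Lm i k" by (simp add: Lm_def lam_nn)
lemma Ls_nn: "0 \<le> Ls k" by (simp add: Ls_def Lm_nn sum_nonneg)

lemma R_bdd: "k \<in> hists s0 \<Longrightarrow> \<bar>R (e @ k)\<bar> \<le> SR"
  unfolding R_def by (rule pf_bdd_app[OF r_bdd pl_adm x0])

lemma G_bdd: "k \<in> hists s0 \<Longrightarrow> \<bar>G i (e @ k)\<bar> \<le> SG i"
  unfolding G_def by (rule pf_bdd_app[OF g_bdd pl_adm x0])

lemma CG_bdd: "k \<in> hists s0 \<Longrightarrow> \<bar>CG i k\<bar> \<le> L"
proof -
  assume k: "k \<in> hists s0"
  have "\<bar>CG i k\<bar> \<le> SG i / (1 - \<beta>)"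
    unfolding CG_def by (rule cv_bdd) (rule G_bdd[OF k])
  then show ?thesis using SG_div[of i] by simp
qed

lemma Q_bdd: "k \<in> hists s0 \<Longrightarrow> \<bar>Q k\<bar> \<le> Kc * Ls k"
proof -
  assume k: "k \<in> hists s0"
  have "\<bar>Q k\<bar> \<le> (\<Sum>i\<in>UNIV. \<bar>Lm i k * (CG i k - gbar i)\<bar>)" unfolding Q_def by (rule sum_abs)
  also have "\<dots> \<le> (\<Sum>i\<in>UNIV. Lm i k * Kc)"
  proof (rule sum_mono)
    fix i
    have "\<bar>gbar i\<bar> \<le> (\<Sum>j\<in>UNIV. \<bar>gbar j\<bar>)" by (rule member_le_sum) auto
    then have "\<bar>CG i k - gbar i\<bar> \<le> Kc" unfolding Kc_def using CG_bdd[OF k, of i] by linarith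
    then show "\<bar>Lm i k * (CG i k - gbar i)\<bar> \<le> Lm i k * Kc"
      unfolding abs_mult using Lm_nn[of i k] by (simp add: mult_left_mono)
  qed
  also have "\<dots> = Kc * Ls k" unfolding Ls_def by (simp add: sum_distrib_left mult.commute)
  finally show ?thesis .
qed

lemma snd_post_hist: "h \<in> hists s0 \<Longrightarrow> set (map snd (post_hist pl h)) \<subseteq> A"
proof (induction rule: hists_induct)
  case base then show ?case using pl_A[of "[s0]"] by simp
next
  case (step s k) then show ?case using pl_A[OF hists_Cons[OF step(1)]] by simp
qed

lemma finite_posthists: "finite (posthists A s0 t)"
proof (rule finite_subset)
  show "posthists A s0 t \<subseteq> {xs. set xs \<subseteq> (UNIV::'s set) \<times> A \<and> length xs = Suc t}"
    unfolding posthists_def by auto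
  show "finite {xs. set xs \<subseteq> (UNIV::'s set) \<times> A \<and> length xs = Suc t}"
    by (rule finite_lists_length_eq) (use A_fin in \<open>intro finite_cartesian_product, auto intro: finite_class.finite_UNIV\<close>)
qed

lemma aa_nn: "0 \<le> aa t"
  unfolding aa_def using \<beta>0 by (intro mult_nonneg_nonneg Ex_nn Ls_nn) auto

lemma aa_summable: "summable aa"
proof -
  define b where "b t = (\<Sum>ht\<in>posthists A s0 t. \<Sum>i\<in>UNIV. \<beta> ^ t * lam i ht * path_prob P (map fst ht))" for t
  have sb: "summable b" using lam unfolding Lambda_set_def b_def by simp
  have le: "aa t \<le> b t" for t
  proof -
    let ?f = "\<lambda>e. post_hist pl (e @ [s0])"
    let ?E = "{e::'s list. length e = t}"
    have inj: "inj_on ?f ?E"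
    proof (rule inj_onI)
      fix e e' assume "?f e = ?f e'"
      then have "map fst (?f e) = map fst (?f e')" by simp
      then show "e = e'" by (simp add: post_hist_fst)
    qed
    have sub: "?f ` ?E \<subseteq> posthists A s0 t"
      unfolding posthists_def
      using snd_post_hist[OF hists_app[OF hists_single]] by (auto simp: post_hist_len post_hist_fst)
    have "aa t = (\<Sum>e\<in>?E. \<beta> ^ t * (ext_prob P e [s0] * (\<Sum>i\<in>UNIV. lam i (?f e))))"
      unfolding aa_def Ex_def Ls_def Lm_def by (simp add: sum_distrib_left)
    also have "\<dots> = (\<Sum>e\<in>?E. \<Sum>i\<in>UNIV. \<beta> ^ t * lam i (?f e) * path_prob P (map fst (?f e)))"
      by (rule sum.cong[OF refl]) (simp add: post_hist_fst ext_prob_path_prob sum_distrib_left mult_ac)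
    also have "\<dots> = (\<Sum>ht\<in>?f ` ?E. \<Sum>i\<in>UNIV. \<beta> ^ t * lam i ht * path_prob P (map fst ht))"
      by (subst sum.reindex[OF inj]) (simp add: o_def)
    also have "\<dots> \<le> b t" unfolding b_def
    proof (rule sum_mono2[OF finite_posthists sub])
      fix ht assume "ht \<in> posthists A s0 t - ?f ` ?E"
      show "0 \<le> (\<Sum>i\<in>UNIV. \<beta> ^ t * lam i ht * path_prob P (map fst ht))"
        unfolding path_prob_def using \<beta>0
        by (intro sum_nonneg mult_nonneg_nonneg lam_nn ext_prob_nn) auto
    qed
    finally show ?thesis .
  qed
  show ?thesis
    by (rule summable_comparison_test[OF _ sb]) (use le aa_nn in auto)
qed

lemma hists_split: "k \<in> hists s0 \<Longrightarrow> k = butlast k @ [s0]"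
proof -
  assume "k \<in> hists s0"
  then have "k \<noteq> []" "last k = s0" by (auto simp: hists_def)
  then show ?thesis using append_butlast_last_id[of k] by simp
qed

lemma sm_Ls: "k \<in> hists s0 \<Longrightarrow> sm k Ls"
proof -
  assume k: "k \<in> hists s0"
  define e where "e = butlast k"
  define T where "T = length e"
  have ke: "k = e @ [s0]" unfolding e_def by (rule hists_split[OF k])
  define c where "c = 1 / (\<beta> ^ T * ext_prob P e [s0])"
  have pe: "0 < ext_prob P e [s0]" by (rule ext_prob_pos)
  have c_pos: "0 < c" unfolding c_def using pe \<beta>0 by simp
  have le: "\<beta> ^ n * Ex P k n Ls \<le> c * aa (n + T)" for n
  proof -
    have "ext_prob P e [s0] * Ex P k n Ls \<le> Ex P [s0] T (\<lambda>k'. Ex P k' n Ls)"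
      unfolding ke T_def by (rule Ex_single_le) (auto intro!: Ex_nn Ls_nn)
    also have "\<dots> = Ex P [s0] (n + T) Ls" by (simp add: Ex_tower add.commute)
    finally have h: "ext_prob P e [s0] * Ex P k n Ls \<le> Ex P [s0] (n + T) Ls" .
    have "\<beta> ^ n * Ex P k n Ls = (\<beta> ^ (n + T) * (ext_prob P e [s0] * Ex P k n Ls)) * c"
      unfolding c_def using pe \<beta>0 by (simp add: power_add)
    also have "\<dots> \<le> (\<beta> ^ (n + T) * Ex P [s0] (n + T) Ls) * c"
      using h \<beta>0 c_pos by (intro mult_right_mono mult_left_mono) auto
    finally show ?thesis unfolding aa_def by (simp add: mult.commute)
  qed
  have "summable (\<lambda>n. c * aa (n + T))"
    using summable_mult[OF summable_ignore_initial_segment[OF aa_summable, of T], of c] .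
  then show ?thesis unfolding sm_def
  proof (rule summable_comparison_test[rotated])
    have nn: "0 \<le> \<beta> ^ n * Ex P k n Ls" for n using \<beta>0 by (intro mult_nonneg_nonneg Ex_nn Ls_nn) auto
    show "\<exists>N. \<forall>n\<ge>N. norm (\<beta> ^ n * Ex P k n Ls) \<le> c * aa (n + T)"
      using le nn by auto
  qed
qed

lemma sm_Q: "k \<in> hists s0 \<Longrightarrow> sm k Q"
proof -
  assume k: "k \<in> hists s0"
  have le: "norm (\<beta> ^ n * Ex P k n Q) \<le> Kc * (\<beta> ^ n * Ex P k n Ls)" for n
  proof -
    have "\<bar>Ex P k n Q\<bar> \<le> Ex P k n (\<lambda>k'. \<bar>Q k'\<bar>)" by (rule Ex_abs)
    also have "\<dots> \<le> Ex P k n (\<lambda>k'. Kc * Ls k')" by (rule Ex_mono) (rule Q_bdd[OF hists_app[OF k]])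
    also have "\<dots> = Kc * Ex P k n Ls" by (rule Ex_cmult)
    finally show ?thesis using \<beta>0 by (simp add: abs_mult mult_left_mono mult.left_commute)
  qed
  have "summable (\<lambda>n. Kc * (\<beta> ^ n * Ex P k n Ls))"
    using sm_Ls[OF k] unfolding sm_def by (rule summable_mult)
  then show ?thesis unfolding sm_def
    by (rule summable_comparison_test[rotated]) (use le in auto)
qed

lemma sm_R: "k \<in> hists s0 \<Longrightarrow> sm k R"
  by (rule sm_bdd) (rule R_bdd)

lemma sm_G: "k \<in> hists s0 \<Longrightarrow> sm k (G i)"
  by (rule sm_bdd) (rule G_bdd)

end


context dual begin

definition CR :: "'s list \<Rightarrow> real" where "CR k = cont_value \<beta> P R k"
definition CQ :: "'s list \<Rightarrow> real" where "CQ k = cont_value \<beta> P Q k"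
definition CLs :: "'s list \<Rightarrow> real" where "CLs k = cont_value \<beta> P Ls k"
definition Phi :: "'s list \<Rightarrow> real" where "Phi k = CR k + (\<Sum>i\<in>UNIV. gm k $ i * CG i k) + CQ k"
definition Sg :: "'s list \<Rightarrow> real" where "Sg k = (\<Sum>i\<in>UNIV. gm k $ i)"
definition D :: "'s list \<Rightarrow> real" where "D k = F (gm k) (st k) (hd k) - Phi k"

lemma rec_R: "k \<in> hists s0 \<Longrightarrow> CR k = R k + \<beta> * (\<Sum>s'\<in>UNIV. P (hd k) s' * CR (s' # k))"
  unfolding CR_def by (rule cv_rec) (rule sm_R[OF hists_Cons])

lemma rec_G: "k \<in> hists s0 \<Longrightarrow> CG i k = G i k + \<beta> * (\<Sum>s'\<in>UNIV. P (hd k) s' * CG i (s' # k))"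
  unfolding CG_def by (rule cv_rec) (rule sm_G[OF hists_Cons])

lemma rec_Q: "k \<in> hists s0 \<Longrightarrow> CQ k = Q k + \<beta> * (\<Sum>s'\<in>UNIV. P (hd k) s' * CQ (s' # k))"
  unfolding CQ_def by (rule cv_rec) (rule sm_Q[OF hists_Cons])

lemma gm_Cons': "k \<in> hists s0 \<Longrightarrow> gm (s # k) $ i = gm k $ i + Lm i k"
  using gm_Cons[OF hists_ne] by (simp add: Lm_def)

lemma Phi_rec:
  assumes k: "k \<in> hists s0"
  shows "Phi k = R k + (\<Sum>i\<in>UNIV. gm k $ i * G i k + Lm i k * (G i k - gbar i))
                 + \<beta> * (\<Sum>s'\<in>UNIV. P (hd k) s' * Phi (s' # k))"
proof -
  define p where "p s' = P (hd k) s'" for s'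
  define c where "c i = gm k $ i + Lm i k" for i
  have pt: "p s' * Phi (s' # k) = p s' * CR (s' # k) + (\<Sum>i\<in>UNIV. c i * (p s' * CG i (s' # k))) + p s' * CQ (s' # k)" for s'
    unfolding Phi_def c_def using gm_Cons'[OF k] by (simp add: distrib_left sum_distrib_left mult_ac)
  have S1: "(\<Sum>s'\<in>UNIV. p s' * Phi (s' # k)) = (\<Sum>s'\<in>UNIV. p s' * CR (s' # k))
      + (\<Sum>i\<in>UNIV. c i * (\<Sum>s'\<in>UNIV. p s' * CG i (s' # k))) + (\<Sum>s'\<in>UNIV. p s' * CQ (s' # k))"
  proof -
    have "(\<Sum>s'\<in>UNIV. p s' * Phi (s' # k)) = (\<Sum>s'\<in>UNIV. p s' * CR (s' # k))
      + (\<Sum>s'\<in>UNIV. \<Sum>i\<in>UNIV. c i * (p s' * CG i (s' # k))) + (\<Sum>s'\<in>UNIV. p s' * CQ (s' # k))"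
      unfolding pt by (simp add: sum.distrib)
    also have "(\<Sum>s'\<in>UNIV. \<Sum>i\<in>UNIV. c i * (p s' * CG i (s' # k))) = (\<Sum>i\<in>UNIV. c i * (\<Sum>s'\<in>UNIV. p s' * CG i (s' # k)))"
      by (subst sum.swap) (simp add: sum_distrib_left)
    finally show ?thesis .
  qed
  have bR: "\<beta> * (\<Sum>s'\<in>UNIV. p s' * CR (s' # k)) = CR k - R k" using rec_R[OF k] unfolding p_def by simp
  have bQ: "\<beta> * (\<Sum>s'\<in>UNIV. p s' * CQ (s' # k)) = CQ k - Q k" using rec_Q[OF k] unfolding p_def by simp
  have bG: "\<beta> * (\<Sum>i\<in>UNIV. c i * (\<Sum>s'\<in>UNIV. p s' * CG i (s' # k))) = (\<Sum>i\<in>UNIV. c i * (CG i k - G i k))"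
  proof -
    have "\<beta> * (\<Sum>i\<in>UNIV. c i * (\<Sum>s'\<in>UNIV. p s' * CG i (s' # k))) = (\<Sum>i\<in>UNIV. c i * (\<beta> * (\<Sum>s'\<in>UNIV. p s' * CG i (s' # k))))"
      by (simp add: sum_distrib_left mult.left_commute)
    also have "\<dots> = (\<Sum>i\<in>UNIV. c i * (CG i k - G i k))"
      by (rule sum.cong[OF refl]) (use rec_G[OF k] in \<open>simp add: p_def\<close>)
    finally show ?thesis .
  qed
  have B: "\<beta> * (\<Sum>s'\<in>UNIV. p s' * Phi (s' # k)) = (CR k - R k) + (\<Sum>i\<in>UNIV. c i * (CG i k - G i k)) + (CQ k - Q k)"
    unfolding S1 distrib_left bR bQ bG ..
  have C: "(\<Sum>i\<in>UNIV. gm k $ i * CG i k) + Q k - (\<Sum>i\<in>UNIV. c i * (CG i k - G i k))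
     = (\<Sum>i\<in>UNIV. gm k $ i * G i k + Lm i k * (G i k - gbar i))"
  proof -
    have "(\<Sum>i\<in>UNIV. gm k $ i * CG i k) + Q k - (\<Sum>i\<in>UNIV. c i * (CG i k - G i k))
        = (\<Sum>i\<in>UNIV. gm k $ i * CG i k + Lm i k * (CG i k - gbar i) - c i * (CG i k - G i k))"
      unfolding Q_def by (simp add: sum.distrib sum_subtractf)
    also have "\<dots> = (\<Sum>i\<in>UNIV. gm k $ i * G i k + Lm i k * (G i k - gbar i))"
      by (rule sum.cong[OF refl]) (simp add: c_def algebra_simps)
    finally show ?thesis .
  qed
  have e: "(\<Sum>s'\<in>UNIV. P (hd k) s' * Phi (s' # k)) = (\<Sum>s'\<in>UNIV. p s' * Phi (s' # k))" by (simp add: p_def)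
  show ?thesis unfolding e using B C Phi_def[of k] by linarith
qed

lemma D_rec:
  assumes k: "k \<in> hists s0"
  shows "D k \<le> \<beta> * (\<Sum>s'\<in>UNIV. P (hd k) s' * D (s' # k))"
proof -
  define mu where "mu = lv (post_hist pl k)"
  have mu: "mu \<in> orth" unfolding mu_def by (rule lv_orth)
  have ne: "k \<noteq> []" by (rule hists_ne[OF k])
  have Fk: "F (gm k) (st k) (hd k) \<le> hF F (gm k) (st k) (hd k) (pl k) mu" by (rule inv(4)[OF k mu])
  have hFeq: "hF F (gm k) (st k) (hd k) (pl k) mu = R k + (\<Sum>i\<in>UNIV. gm k $ i * G i k + Lm i k * (G i k - gbar i))
       + \<beta> * (\<Sum>s'\<in>UNIV. P (hd k) s' * F (gm (s' # k)) (st (s' # k)) (hd (s' # k)))"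
    unfolding hF_def R_def G_def path_fun_def mu_def
    by (simp add: st_def[symmetric] Lm_def gm_Cons[OF ne] st_Cons[OF ne])
  have "D k \<le> \<beta> * (\<Sum>s'\<in>UNIV. P (hd k) s' * F (gm (s' # k)) (st (s' # k)) (hd (s' # k)))
       - \<beta> * (\<Sum>s'\<in>UNIV. P (hd k) s' * Phi (s' # k))"
    unfolding D_def using Fk hFeq Phi_rec[OF k] by linarith
  also have "\<dots> = \<beta> * (\<Sum>s'\<in>UNIV. P (hd k) s' * D (s' # k))"
    unfolding D_def by (simp add: right_diff_distrib sum_subtractf)
  finally show ?thesis .
qed

lemma Ex_D_step: "Ex P [s0] n D \<le> \<beta> * Ex P [s0] (Suc n) D"
proof -
  have "Ex P [s0] n D \<le> Ex P [s0] n (\<lambda>k. \<beta> * (\<Sum>s'\<in>UNIV. P (hd k) s' * D (s' # k)))"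
    by (rule Ex_mono) (rule D_rec[OF hists_app[OF hists_single]])
  also have "\<dots> = \<beta> * Ex P [s0] (Suc n) D" by (simp add: Ex_cmult Ex_Suc)
  finally show ?thesis .
qed

lemma D_tele: "D [s0] \<le> \<beta> ^ N * Ex P [s0] N D"
proof (induction N)
  case 0 then show ?case by simp
next
  case (Suc N)
  have "\<beta> ^ N * Ex P [s0] N D \<le> \<beta> ^ N * (\<beta> * Ex P [s0] (Suc N) D)"
    using Ex_D_step \<beta>0 by (intro mult_left_mono) auto
  then show ?case using Suc by (simp add: mult_ac)
qed

end


context dual begin

lemma Kc_nn: "0 \<le> Kc" unfolding Kc_def using L_nn by (simp add: sum_nonneg)

lemma CQ_bdd:
  assumes k: "k \<in> hists s0"
  shows "\<bar>CQ k\<bar> \<le> Kc * CLs k"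
proof -
  have le: "\<bar>\<beta> ^ n * Ex P k n Q\<bar> \<le> Kc * (\<beta> ^ n * Ex P k n Ls)" for n
  proof -
    have "\<bar>Ex P k n Q\<bar> \<le> Ex P k n (\<lambda>k'. \<bar>Q k'\<bar>)" by (rule Ex_abs)
    also have "\<dots> \<le> Ex P k n (\<lambda>k'. Kc * Ls k')" by (rule Ex_mono) (rule Q_bdd[OF hists_app[OF k]])
    also have "\<dots> = Kc * Ex P k n Ls" by (rule Ex_cmult)
    finally show ?thesis using \<beta>0 by (simp add: abs_mult mult_left_mono mult.left_commute)
  qed
  have s2: "summable (\<lambda>n. Kc * (\<beta> ^ n * Ex P k n Ls))"
    using sm_Ls[OF k] unfolding sm_def by (rule summable_mult)
  have s1: "summable (\<lambda>n. \<bar>\<beta> ^ n * Ex P k n Q\<bar>)"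
    by (rule summable_comparison_test[OF _ s2]) (use le in auto)
  have "\<bar>CQ k\<bar> \<le> (\<Sum>n. \<bar>\<beta> ^ n * Ex P k n Q\<bar>)"
    unfolding CQ_def cont_value_Ex by (rule summable_rabs[OF s1])
  also have "\<dots> \<le> (\<Sum>n. Kc * (\<beta> ^ n * Ex P k n Ls))" by (rule suminf_le[OF le s1 s2])
  also have "\<dots> = Kc * CLs k" unfolding CLs_def cont_value_Ex using sm_Ls[OF k] unfolding sm_def
    by (rule suminf_mult)
  finally show ?thesis .
qed

lemma Sg_nn: "k \<in> hists s0 \<Longrightarrow> 0 \<le> Sg k"
  using inv(2) unfolding Sg_def by (auto simp: orth_iff intro!: sum_nonneg)

lemma D_bdd:
  assumes k: "k \<in> hists s0"
  shows "D k \<le> 2 * L * (1 + Sg k) + Kc * CLs k"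
proof -
  have F1: "F (gm k) (st k) (hd k) \<le> (1 + Sg k) * L"
    using F_up[OF inv(1)[OF k] inv(2)[OF k]] unfolding Sg_def by simp
  have R1: "- CR k \<le> L"
  proof -
    have "\<bar>CR k\<bar> \<le> SR / (1 - \<beta>)" unfolding CR_def by (rule cv_bdd) (rule R_bdd[OF k])
    then show ?thesis using SR_div by linarith
  qed
  have G1: "- (\<Sum>i\<in>UNIV. gm k $ i * CG i k) \<le> Sg k * L"
  proof -
    have "(\<Sum>i\<in>UNIV. gm k $ i * (- L)) \<le> (\<Sum>i\<in>UNIV. gm k $ i * CG i k)"
    proof (rule sum_mono)
      fix i
      have "- L \<le> CG i k" using CG_bdd[OF k, of i] by linarith
      then show "gm k $ i * (- L) \<le> gm k $ i * CG i k"
        using inv(2)[OF k] by (intro mult_left_mono) (auto simp: orth_iff)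
    qed
    moreover have "(\<Sum>i\<in>UNIV. gm k $ i * (- L)) = - (Sg k * L)"
      unfolding Sg_def by (simp add: sum_negf sum_distrib_right)
    ultimately show ?thesis by linarith
  qed
  have Q1: "- CQ k \<le> Kc * CLs k" using CQ_bdd[OF k] by linarith
  show ?thesis unfolding D_def Phi_def using F1 R1 G1 Q1 by (simp add: algebra_simps)
qed

lemma Sg_Cons: "k \<in> hists s0 \<Longrightarrow> Sg (s # k) = Sg k + Ls k"
  unfolding Sg_def Ls_def using gm_Cons'[of k s] by (simp add: sum.distrib)

lemma Ex_Sg: "Ex P [s0] N Sg = Sg [s0] + (\<Sum>j<N. Ex P [s0] j Ls)"
proof (induction N)
  case 0 then show ?case by simp
next
  case (Suc N)
  have "Ex P [s0] (Suc N) Sg = Ex P [s0] N (\<lambda>k. \<Sum>s'\<in>UNIV. P (hd k) s' * Sg (s' # k))" by (rule Ex_Suc)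
  also have "\<dots> = Ex P [s0] N (\<lambda>k. Sg k + Ls k)"
  proof (rule Ex_cong)
    fix e :: "'s list" assume "length e = N"
    have k: "e @ [s0] \<in> hists s0" by (rule hists_app[OF hists_single])
    show "(\<Sum>s'\<in>UNIV. P (hd (e @ [s0])) s' * Sg (s' # e @ [s0])) = Sg (e @ [s0]) + Ls (e @ [s0])"
      using Sg_Cons[OF k] by (simp add: sum_distrib_right[symmetric] P_sum)
  qed
  also have "\<dots> = Ex P [s0] N Sg + Ex P [s0] N Ls" by (rule Ex_add)
  finally show ?case using Suc by simp
qed

lemma Ex_CLs: "\<beta> ^ N * Ex P [s0] N CLs = (\<Sum>n. aa (n + N))"
proof -
  let ?E = "{e::'s list. length e = N}"
  have sm: "summable (\<lambda>n. \<beta> ^ n * Ex P (e @ [s0]) n Ls)" for e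
    using sm_Ls[OF hists_app[OF hists_single]] unfolding sm_def .
  have "Ex P [s0] N CLs = (\<Sum>e\<in>?E. ext_prob P e [s0] * (\<Sum>n. \<beta> ^ n * Ex P (e @ [s0]) n Ls))"
    unfolding Ex_def CLs_def cont_value_Ex ..
  also have "\<dots> = (\<Sum>e\<in>?E. \<Sum>n. ext_prob P e [s0] * (\<beta> ^ n * Ex P (e @ [s0]) n Ls))"
    by (rule sum.cong[OF refl]) (rule suminf_mult[OF sm, symmetric])
  also have "\<dots> = (\<Sum>n. \<Sum>e\<in>?E. ext_prob P e [s0] * (\<beta> ^ n * Ex P (e @ [s0]) n Ls))"
    by (rule suminf_sum[symmetric]) (rule summable_mult[OF sm])
  also have "\<dots> = (\<Sum>n. \<beta> ^ n * Ex P [s0] N (\<lambda>k. Ex P k n Ls))"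
    unfolding Ex_def[of P "[s0]" N] by (simp add: sum_distrib_left mult_ac)
  also have "\<dots> = (\<Sum>n. \<beta> ^ n * Ex P [s0] (N + n) Ls)" by (simp add: Ex_tower)
  finally have e1: "Ex P [s0] N CLs = (\<Sum>n. \<beta> ^ n * Ex P [s0] (N + n) Ls)" .
  have s: "summable (\<lambda>n. \<beta> ^ n * Ex P [s0] (N + n) Ls)"
  proof -
    have "summable (\<lambda>n. aa (n + N))" by (rule summable_ignore_initial_segment[OF aa_summable])
    then have s1: "summable (\<lambda>n. (1 / \<beta> ^ N) * aa (n + N))" by (rule summable_mult)
    have eq: "(\<lambda>n. (1 / \<beta> ^ N) * aa (n + N)) = (\<lambda>n. \<beta> ^ n * Ex P [s0] (N + n) Ls)"
      unfolding aa_def using \<beta>0 by (intro ext) (simp add: power_add add.commute)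
    show ?thesis using s1 unfolding eq .
  qed
  have "\<beta> ^ N * Ex P [s0] N CLs = (\<Sum>n. \<beta> ^ N * (\<beta> ^ n * Ex P [s0] (N + n) Ls))"
    unfolding e1 by (rule suminf_mult[OF s, symmetric])
  also have "\<dots> = (\<Sum>n. aa (n + N))"
    unfolding aa_def by (simp add: power_add add.commute mult_ac)
  finally show ?thesis .
qed

lemma D_root_le: "D [s0] \<le> 0"
proof -
  define b where "b N = 2 * L * (\<beta> ^ N * (1 + Sg [s0]) + (\<Sum>j<N. \<beta> ^ (N - j) * aa j)) + Kc * (\<Sum>n. aa (n + N))" for N
  have le: "D [s0] \<le> b N" for N
  proof -
    have "D [s0] \<le> \<beta> ^ N * Ex P [s0] N D" by (rule D_tele)
    also have "\<dots> \<le> \<beta> ^ N * Ex P [s0] N (\<lambda>k. 2 * L * (1 + Sg k) + Kc * CLs k)"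
      using \<beta>0 by (intro mult_left_mono Ex_mono D_bdd hists_app hists_single) auto
    also have "\<dots> = 2 * L * (\<beta> ^ N * (1 + Ex P [s0] N Sg)) + Kc * (\<beta> ^ N * Ex P [s0] N CLs)"
      by (simp add: Ex_add Ex_cmult Ex_const algebra_simps)
    also have "\<beta> ^ N * (1 + Ex P [s0] N Sg) = \<beta> ^ N * (1 + Sg [s0]) + (\<Sum>j<N. \<beta> ^ (N - j) * aa j)"
    proof -
      have "\<beta> ^ N * (\<Sum>j<N. Ex P [s0] j Ls) = (\<Sum>j<N. \<beta> ^ (N - j) * aa j)"
        unfolding sum_distrib_left aa_def
      proof (rule sum.cong[OF refl])
        fix j assume "j \<in> {..<N}"
        then have "\<beta> ^ N = \<beta> ^ (N - j) * \<beta> ^ j" by (simp add: power_add[symmetric])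
        then show "\<beta> ^ N * Ex P [s0] j Ls = \<beta> ^ (N - j) * (\<beta> ^ j * Ex P [s0] j Ls)" by simp
      qed
      then show ?thesis unfolding Ex_Sg by (simp add: algebra_simps)
    qed
    also note Ex_CLs
    finally show ?thesis unfolding b_def .
  qed
  have "b \<longlonglongrightarrow> 2 * L * (0 * (1 + Sg [s0]) + 0) + Kc * 0"
    unfolding b_def
    by (intro tendsto_intros LIMSEQ_power_zero conv_zero[OF aa_summable aa_nn] tail_zero[OF aa_summable])
       (use \<beta>0 \<beta>1 in auto)
  then have "b \<longlonglongrightarrow> 0" by simp
  then show ?thesis using le by (intro LIMSEQ_le_const[of b 0]) auto
qed

lemma Lagr_eq: "Lagr \<beta> P \<zeta> r g gbar pl lam \<gamma>0 x0 s0 = Phi [s0]"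
proof -
  have k: "[s0] \<in> hists s0" by simp
  have "Lagr \<beta> P \<zeta> r g gbar pl lam \<gamma>0 x0 s0 = cont_value \<beta> P (\<lambda>h. R h + (\<Sum>i\<in>UNIV. \<gamma>0 $ i * G i h) + Q h) [s0]"
    unfolding Lagr_def R_def G_def Q_def Lm_def CG_def ..
  also have "\<dots> = CR [s0] + (\<Sum>i\<in>UNIV. \<gamma>0 $ i * CG i [s0]) + CQ [s0]"
  proof -
    have sG: "sm [s0] (\<lambda>h. \<Sum>i\<in>UNIV. \<gamma>0 $ i * G i h)" by (intro sm_sum sm_cmult sm_G[OF k])
    have "cont_value \<beta> P (\<lambda>h. R h + (\<Sum>i\<in>UNIV. \<gamma>0 $ i * G i h) + Q h) [s0]
        = cont_value \<beta> P (\<lambda>h. R h + (\<Sum>i\<in>UNIV. \<gamma>0 $ i * G i h)) [s0] + cont_value \<beta> P Q [s0]"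
      by (rule cv_add) (intro sm_add sm_R[OF k] sG, rule sm_Q[OF k])
    also have "cont_value \<beta> P (\<lambda>h. R h + (\<Sum>i\<in>UNIV. \<gamma>0 $ i * G i h)) [s0]
        = CR [s0] + cont_value \<beta> P (\<lambda>h. \<Sum>i\<in>UNIV. \<gamma>0 $ i * G i h) [s0]"
      unfolding CR_def by (rule cv_add[OF sm_R[OF k] sG])
    also have "cont_value \<beta> P (\<lambda>h. \<Sum>i\<in>UNIV. \<gamma>0 $ i * G i h) [s0] = (\<Sum>i\<in>UNIV. \<gamma>0 $ i * CG i [s0])"
      unfolding CG_def by (subst cv_sum) (auto intro: sm_cmult sm_G[OF k] simp: cv_cmult[OF sm_G[OF k]])
    finally show ?thesis unfolding CQ_def .
  qed
  also have "\<dots> = Phi [s0]" unfolding Phi_def by (simp add: gm_single)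
  finally show ?thesis .
qed

lemma F_le_Lagr: "F \<gamma>0 x0 s0 \<le> Lagr \<beta> P \<zeta> r g gbar pl lam \<gamma>0 x0 s0"
  using D_root_le unfolding D_def Lagr_eq by (simp add: gm_single st_single)

end


context model begin

lemma part1:
  assumes xenum: "bij_betw xenum (enum_index X) X"
  shows "\<exists>F\<in>Nspace \<beta> P A X p \<zeta> r g gbar senum xenum.
            \<forall>\<gamma>\<in>nonneg_orthant. \<forall>x\<in>X. \<forall>s. ereal (F \<gamma> x s) = bellman_rhs \<beta> P A p \<zeta> r g gbar F \<gamma> x s"
proof (intro bexI ballI allI)
  fix \<gamma> x s assume g: "\<gamma> \<in> orth" and x: "x \<in> X"
  show "ereal (Flim \<gamma> x s) = bellman_rhs \<beta> P A p \<zeta> r g gbar Flim \<gamma> x s" by (rule Flim_fix[OF x g])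
next
  show "Flim \<in> Nspace \<beta> P A X p \<zeta> r g gbar senum xenum"
    unfolding Nspace_def
  proof (intro CollectI conjI ballI allI impI Flim_Mspace[OF xenum])
    fix x s assume x: "x \<in> X"
    show "convex_on nonneg_orthant (\<lambda>\<gamma>. Flim \<gamma> x s)" using Flim_cvx x unfolding cvx_def by blast
    show "\<bar>Flim \<gamma>1 x s - Flim \<gamma>2 x s\<bar> \<le> Lconst \<beta> X A r g * (\<Sum>i\<in>UNIV. \<bar>\<gamma>1 $ i - \<gamma>2 $ i\<bar>)"
      if "\<gamma>1 \<in> orth" "\<gamma>2 \<in> orth" for \<gamma>1 \<gamma>2
      using Flim_lip x that unfolding lip_def by blast
    show "cont_value \<beta> P (path_fun \<zeta> a x r) [s] + (\<Sum>i\<in>UNIV. \<gamma> $ i * cont_value \<beta> P (path_fun \<zeta> a x (g i)) [s]) \<le> Flim \<gamma> x s"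
      if "feas x s a" "\<gamma> \<in> orth" for a \<gamma>
      using Flim_good x that unfolding good_def Vf_def by blast
    show "Flim \<gamma> x s \<le> (1 + sum (($) \<gamma>) UNIV) * Lconst \<beta> X A r g" if "\<gamma> \<in> orth" for \<gamma>
      using Flim_good x that unfolding good_def U_def by blast
  qed
qed

lemma part2:
  assumes FN: "F \<in> Nspace \<beta> P A X p \<zeta> r g gbar senum xenum"
    and Feq: "\<forall>\<gamma>\<in>nonneg_orthant. \<forall>x\<in>X. \<forall>s. ereal (F \<gamma> x s) = bellman_rhs \<beta> P A p \<zeta> r g gbar F \<gamma> x s"
    and \<gamma>: "\<gamma> \<in> nonneg_orthant" and x: "x \<in> X"
  shows "ereal (F \<gamma> x s) \<le> D_tilde \<beta> P A p \<zeta> r g gbar \<gamma> x s"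
  unfolding D_tilde_def
proof (rule INF_greatest)
  fix lam :: "'i \<Rightarrow> ('s \<times> 'a) list \<Rightarrow> real" assume lam: "lam \<in> Lambda_set \<beta> P A s"
  interpret d: dual P \<beta> A X \<zeta> p r g gbar F lam \<gamma> x s
  proof
    show "F \<gamma>' x' s' \<le> (1 + (\<Sum>i\<in>UNIV. \<gamma>' $ i)) * Lconst \<beta> X A r g" if "x' \<in> X" "\<gamma>' \<in> orth" for x' s' \<gamma>'
      using FN that unfolding Nspace_def by auto
    show "ereal (F \<gamma>' x' s') = bellman_rhs \<beta> P A p \<zeta> r g gbar F \<gamma>' x' s'" if "x' \<in> X" "\<gamma>' \<in> orth" for x' s' \<gamma>'
      using Feq that by blast
  qed (use \<gamma> x lam in auto)
  show "ereal (F \<gamma> x s) \<le> (SUP a\<in>adm_plans A p \<zeta> x s. ereal (Lagr \<beta> P \<zeta> r g gbar a lam \<gamma> x s))"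
    by (rule SUP_upper2[OF d.pl_adm]) (simp add: d.F_le_Lagr)
qed

end


theorem corollary3p8:
  fixes P :: "'s::finite \<Rightarrow> 's \<Rightarrow> real"
    and A :: "(real^'n::finite) set"
    and X :: "(real^'m::finite) set"
    and \<zeta> :: "real^'m \<Rightarrow> real^'n \<Rightarrow> 's \<Rightarrow> real^'m"
    and p r :: "real^'m \<Rightarrow> real^'n \<Rightarrow> 's \<Rightarrow> real"
    and g :: "'i::finite \<Rightarrow> real^'m \<Rightarrow> real^'n \<Rightarrow> 's \<Rightarrow> real"
    and gbar :: "'i \<Rightarrow> real"
    and \<beta> :: real
    and senum :: "nat \<Rightarrow> 's"
    and xenum :: "nat \<Rightarrow> real^'m"
  assumes P_pos: "\<And>s s'. P s s' > 0"
    and P_sum: "\<And>s. (\<Sum>s'\<in>UNIV. P s s') = 1"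
    and A_fin: "finite A"
    and X_count: "countable X"
    and \<zeta>_X: "\<And>x a s. x \<in> X \<Longrightarrow> a \<in> A \<Longrightarrow> \<zeta> x a s \<in> X"
    and r_bdd: "\<exists>B. \<forall>x\<in>X. \<forall>a\<in>A. \<forall>s. \<bar>r x a s\<bar> \<le> B"
    and g_bdd: "\<And>i. \<exists>B. \<forall>x\<in>X. \<forall>a\<in>A. \<forall>s. \<bar>g i x a s\<bar> \<le> B"
    and \<beta>: "0 < \<beta>" "\<beta> < 1"
    and senum: "bij_betw senum {1..CARD('s)} UNIV"
    and xenum: "bij_betw xenum (enum_index X) X"
    and standing: "\<And>x s. x \<in> X \<Longrightarrow> \<exists>a. feasible \<beta> P A p \<zeta> g gbar x s a"
  shows "(\<exists>F\<in>Nspace \<beta> P A X p \<zeta> r g gbar senum xenum.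
            \<forall>\<gamma>\<in>nonneg_orthant. \<forall>x\<in>X. \<forall>s.
              ereal (F \<gamma> x s) = bellman_rhs \<beta> P A p \<zeta> r g gbar F \<gamma> x s)
       \<and> (\<forall>F\<in>Nspace \<beta> P A X p \<zeta> r g gbar senum xenum.
            (\<forall>\<gamma>\<in>nonneg_orthant. \<forall>x\<in>X. \<forall>s.
              ereal (F \<gamma> x s) = bellman_rhs \<beta> P A p \<zeta> r g gbar F \<gamma> x s)
            \<longrightarrow> (\<forall>\<gamma>\<in>nonneg_orthant. \<forall>x\<in>X. \<forall>s.
                   ereal (F \<gamma> x s) \<le> D_tilde \<beta> P A p \<zeta> r g gbar \<gamma> x s))"
proof (cases "X = {}")
  case True
  have "(\<lambda>_ _ _. 0) \<in> Nspace \<beta> P A X p \<zeta> r g gbar senum xenum"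
    unfolding Nspace_def Mspace_def Mnorm_def enum_index_def using True by simp
  then show ?thesis using True by blast
next
  case False
  interpret m: model P \<beta> A X \<zeta> p r g gbar
    by unfold_locales (use assms False in \<open>auto simp: bnd_def\<close>)
  show ?thesis
  proof
    show "\<exists>F\<in>Nspace \<beta> P A X p \<zeta> r g gbar senum xenum.
            \<forall>\<gamma>\<in>nonneg_orthant. \<forall>x\<in>X. \<forall>s.
              ereal (F \<gamma> x s) = bellman_rhs \<beta> P A p \<zeta> r g gbar F \<gamma> x s"
      by (rule m.part1[OF xenum])
    show "\<forall>F\<in>Nspace \<beta> P A X p \<zeta> r g gbar senum xenum.
            (\<forall>\<gamma>\<in>nonneg_orthant. \<forall>x\<in>X. \<forall>s.
              ereal (F \<gamma> x s) = bellman_rhs \<beta> P A p \<zeta> r g gbar F \<gamma> x s)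
            \<longrightarrow> (\<forall>\<gamma>\<in>nonneg_orthant. \<forall>x\<in>X. \<forall>s.
                   ereal (F \<gamma> x s) \<le> D_tilde \<beta> P A p \<zeta> r g gbar \<gamma> x s)"
      using m.part2 by blast
  qed
qed

end
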